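(* Under the standing setting and assumptions (A0)–(A3) below, let $\beta\in(0,\tfrac12]$. Then for every $n\in\mathbb N$, almost surely, \[ \mathbb E_n[d^2(x_{n+1},x^* )]\leq d^2(x_n,x^* )-\lambda_n^2(1-2\beta)\,\mathbb E_n\big[\|A_{\lambda_n}(\xi_{n+1},x_n)\|^2_{x_{n+1}}\big]+\lambda_n^2\frac{\int\|\phi^*\|^2_{x^*}\,d\mu}{2\beta}. \]
   Context: Geometry. A Hadamard space is a complete CAT(0) space: a geodesic metric space $(X,d)$ with $d^2(\gamma(tl),x)\leq (1-t)d^2(\gamma(0),x)+td^2(\gamma(l),x)-t(1-t)d^2(\gamma(0),\gamma(l))$ for all $x\in X$, geodesics $\gamma:[0,l]\to X$, $t\in[0,1]$; it is uniquely geodesic, $\gamma_{x,y}$ denoting the geodesic from $x$ to $y$. For $x\in X$, $\angle_x(\gamma,\eta):=\lim_{s,t\to0^+}\bar\angle_x(\gamma(s),\eta(t))$ is the Aleksandrov angle between nonconstant geodesics issuing from $x$; $\Sigma_xX$ is the completion of such geodesics modulo $\angle_x=0$; the tangent space $T_xX$ is the Euclidean cone over $\Sigma_xX$ (elements $t\gamma$, $t\ge0$, all $0\gamma$ identified to $0_x$, $\lambda(t\gamma):=(\lambda t)\gamma$), with metric $d_x(t\gamma,s\eta)=\sqrt{t^2+s^2-2ts\cos\angle_x(\gamma,\eta)}$, $\|t\gamma\|_x=t$, $g_x(t\gamma,s\eta)=ts\cos\angle_x(\gamma,\eta)$; $TX=\bigcup_xT_xX$. $\log_x:X\to T_xX$,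 $\log_xa:=d(x,a)\gamma_{x,a}$ ($a\ne x$), $\log_xx:=0_x$. Vector fields. $A:X\to2^{TX}$ with $A(x)\subseteq T_xX$ is monotone if $g_x(u,\log_xy)\le-g_y(v,\log_yx)$ for all $u\in A(x),v\in A(y)$, and strongly monotone with modulus $\alpha>0$ if $g_x(u,\log_xy)\le-g_y(v,\log_yx)-\alpha d^2(x,y)$. For monotone $A$ and $\lambda>0$, the resolvent $J_\lambda x$ is the unique $z$ with $\tfrac1\lambda\log_zx\in A(z)$ (if it exists); $A$ satisfies the surjectivity condition if such $z$ exists for all $\lambda>0,x\in X$. The Yosida approximate is $A_\lambda x:=\tfrac1\lambda\log_{J_\lambda x}x\in T_{J_\lambda x}X$. Integration. For a probability space and a separable Hadamard space $Y$, $L^p$ consists of measurable $Y$-valued maps with finite $p$-th moment of distance; the integral/expectation of an $L^1$ map is the barycenter of its distribution (minimizer of $z\mapsto\int(d^2(z,w)-d^2(w,y))$), and conditional expectation $\mathbb E[x\mid\mathcal G]$ of $x\in L^2$ is the $\mathcal G$-measurable $L^2$ map minimizing $\int d^2(z,x)$ (extended continuously to $L^1$); this applies to $Y=X$ and $Y=T_xX$. Standing setting. $(E,\mathcal E,\mu)$ and $(\Omega,\mathcal F,\mathbb P)$ are probability spaces; $X$ is a separable Hadamard space with every $T_xX$ separable. $A:E\times X\to2^{TX}$, $A(s,x)\subseteq T_xX$, is a random monotone vector field: each $A(s,\cdot)$ is monotone and $s\mapsto J_\lambda(s,x)$ is $\mathcal E/\mathcal B(X)$-measurable for every $x,\lambda$,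 where $J_\lambda(s,\cdot)$, $A_\lambda(s,\cdot)$ denote resolvent and Yosida approximate of $A(s,\cdot)$; moreover each $A(s,\cdot)$ satisfies the surjectivity condition. For $x\in X$, $S^p_A(x)$ is the set of measurable $\phi:E\to T_xX$ with $\phi(s)\in A(s,x)$ for all $s$ and $\phi\in L^p(E,T_xX,\mu)$; the mean field is $\underline A(x):=\{\int\phi\,d\mu\mid\phi\in S^1_A(x)\}$; $\mathcal Z_A(2):=\{x\mid\exists\phi\in S^2_A(x),\ \int\phi\,d\mu=0_x\}$. Given $x_0\in X$, $(\lambda_n)\subseteq(0,\infty)$ and random variables $\xi_n:\Omega\to E$, the iteration is $x_{n+1}:=J_{\lambda_n}(\xi_{n+1},x_n)$; $\mathcal F_n:=\sigma(\xi_1,\dots,\xi_n)$ ($\mathcal F_0$ trivial), $\mathbb E_n[\cdot]:=\mathbb E[\cdot\mid\mathcal F_n]$. Note $\|A_{\lambda_n}(\xi_{n+1},x_n)\|_{x_{n+1}}=d(x_n,x_{n+1})/\lambda_n$. Assumptions. (A0) $\sum_n\lambda_n^2<\infty$, $\sum_n\lambda_n=\infty$, and $(\xi_{n+1})$ is i.i.d. with distribution $\mu$. (A1) each $A(s,\cdot)$ is strongly monotone with modulus $\alpha(s)\in(0,1]$, where $\alpha:E\to(0,1]$ is measurable with $\underline\alpha:=\int\alpha\,d\mu>0$. (A2) $\underline A$ has a zero $x^*$ (i.e. $0_{x^*}\in\underline A(x^* )$) with $x^*\in\mathcal Z_A(2)$; a fixed $\phi^*\in S^2_A(x^* )$ with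 $\int\phi^*\,d\mu=0_{x^*}$ is chosen. (A3) $\mathbb E_n[g_{x^*}(\phi^*(\xi_{n+1}),\log_{x^*}x_n)]=0$ a.s. for every $n\in\mathbb N$. *)

theory Defs
  imports "HOL-Probability.Probability"
begin

definition geodesic_seg :: "(real \<Rightarrow> 'a::metric_space) \<Rightarrow> real \<Rightarrow> bool" where
  "geodesic_seg \<gamma> l \<longleftrightarrow> l \<ge> 0 \<and> (\<forall>s\<in>{0..l}. \<forall>t\<in>{0..l}. dist (\<gamma> s) (\<gamma> t) = \<bar>s - t\<bar>)"

definition geodesic_space :: "'a::metric_space itself \<Rightarrow> bool" where
  "geodesic_space _ \<longleftrightarrow> (\<forall>x y::'a. \<exists>\<gamma>. geodesic_seg \<gamma> (dist x y) \<and> \<gamma> 0 = x \<and> \<gamma> (dist x y) = y)"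

definition CAT0_ineq :: "'a::metric_space itself \<Rightarrow> bool" where
  "CAT0_ineq _ \<longleftrightarrow> (\<forall>(\<gamma>::real \<Rightarrow> 'a) l x t. geodesic_seg \<gamma> l \<and> t \<in> {0..1} \<longrightarrow>
      (dist (\<gamma> (t * l)) x)\<^sup>2 \<le> (1 - t) * (dist (\<gamma> 0) x)\<^sup>2 + t * (dist (\<gamma> l) x)\<^sup>2
                                 - t * (1 - t) * (dist (\<gamma> 0) (\<gamma> l))\<^sup>2)"

definition hadamard :: "'a::complete_space itself \<Rightarrow> bool" where
  "hadamard T \<longleftrightarrow> geodesic_space T \<and> CAT0_ineq T"

text \<open>The geodesic from x to a (unique on [0, d(x,a)] in a Hadamard space).\<close>
definition geod :: "'a::metric_space \<Rightarrow> 'a \<Rightarrow> real \<Rightarrow> 'a" where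
  "geod x a = (SOME \<gamma>. geodesic_seg \<gamma> (dist x a) \<and> \<gamma> 0 = x \<and> \<gamma> (dist x a) = a)"

definition cangle :: "'a::metric_space \<Rightarrow> 'a \<Rightarrow> 'a \<Rightarrow> real" where
  "cangle x a b = arccos (((dist x a)\<^sup>2 + (dist x b)\<^sup>2 - (dist a b)\<^sup>2) / (2 * dist x a * dist x b))"

text \<open>Aleksandrov angle at x between the geodesics from x to a and from x to b
 (every nonconstant geodesic issuing from x is an initial piece of such a geodesic).\<close>
definition alex_angle :: "'a::metric_space \<Rightarrow> 'a \<Rightarrow> 'a \<Rightarrow> real" where
  "alex_angle x a b = Lim (at_right 0 \<times>\<^sub>F at_right 0)
      (\<lambda>(s, t). cangle x (geod x a s) (geod x b t))"

text \<open>Points of the completion of the space of directions \<Sigma>_x X are represented by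
 Cauchy sequences (w.r.t. the angle) of points a \<noteq> x (standing for the geodesics from x to a).
 A tangent vector t\<gamma> is represented by a pair (t, \<sigma>); representatives with distance 0
 represent the same tangent vector.\<close>

type_synonym 'a tvec = "real \<times> (nat \<Rightarrow> 'a)"

definition dir_cauchy :: "'a::metric_space \<Rightarrow> (nat \<Rightarrow> 'a) \<Rightarrow> bool" where
  "dir_cauchy x \<sigma> \<longleftrightarrow> (\<forall>n. \<sigma> n \<noteq> x) \<and>
     (\<forall>e>0. \<exists>N. \<forall>m\<ge>N. \<forall>n\<ge>N. alex_angle x (\<sigma> m) (\<sigma> n) < e)"

definition dir_angle :: "'a::metric_space \<Rightarrow> (nat \<Rightarrow> 'a) \<Rightarrow> (nat \<Rightarrow> 'a) \<Rightarrow> real" where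
  "dir_angle x \<sigma> \<tau> = lim (\<lambda>n. alex_angle x (\<sigma> n) (\<tau> n))"

definition tangent :: "'a::metric_space \<Rightarrow> 'a tvec set" where
  "tangent x = {(t, \<sigma>). t \<ge> 0 \<and> (t = 0 \<or> dir_cauchy x \<sigma>)}"

definition tzero :: "'a::metric_space \<Rightarrow> 'a tvec" where
  "tzero x = (0, \<lambda>_. x)"

definition tscale :: "real \<Rightarrow> 'a tvec \<Rightarrow> 'a tvec" where
  "tscale c u = (c * fst u, snd u)"

definition tnorm :: "'a tvec \<Rightarrow> real" where
  "tnorm u = fst u"

definition tinner :: "'a::metric_space \<Rightarrow> 'a tvec \<Rightarrow> 'a tvec \<Rightarrow> real" where
  "tinner x u v = fst u * fst v * cos (dir_angle x (snd u) (snd v))"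

definition tdist :: "'a::metric_space \<Rightarrow> 'a tvec \<Rightarrow> 'a tvec \<Rightarrow> real" where
  "tdist x u v = sqrt ((fst u)\<^sup>2 + (fst v)\<^sup>2 - 2 * tinner x u v)"

text \<open>Membership of a tangent vector (modulo the identification of representatives).\<close>
definition tmem :: "'a::metric_space \<Rightarrow> 'a tvec \<Rightarrow> 'a tvec set \<Rightarrow> bool" where
  "tmem x u S \<longleftrightarrow> (\<exists>v\<in>S. tdist x u v = 0)"

text \<open>log_x a = d(x,a) \<gamma>_{x,a}; for a = x this is 0_x (norm 0).\<close>
definition logm :: "'a::metric_space \<Rightarrow> 'a \<Rightarrow> 'a tvec" where
  "logm x a = (dist x a, \<lambda>_. a)"

definition tangent_separable :: "'a::metric_space \<Rightarrow> bool" where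
  "tangent_separable x \<longleftrightarrow> (\<exists>D. countable D \<and> D \<subseteq> tangent x \<and>
      (\<forall>u\<in>tangent x. \<forall>e>0. \<exists>v\<in>D. tdist x u v < e))"

definition strongly_monotone :: "('a::metric_space \<Rightarrow> 'a tvec set) \<Rightarrow> real \<Rightarrow> bool" where
  "strongly_monotone A \<alpha> \<longleftrightarrow> (\<forall>x y u v. u \<in> A x \<and> v \<in> A y \<longrightarrow>
      tinner x u (logm x y) \<le> - tinner y v (logm y x) - \<alpha> * (dist x y)\<^sup>2)"

definition monotone_vf :: "('a::metric_space \<Rightarrow> 'a tvec set) \<Rightarrow> bool" where
  "monotone_vf A \<longleftrightarrow> (\<forall>x y u v. u \<in> A x \<and> v \<in> A y \<longrightarrow>
      tinner x u (logm x y) \<le> - tinner y v (logm y x))"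

definition is_resolvent_pt :: "('a::metric_space \<Rightarrow> 'a tvec set) \<Rightarrow> real \<Rightarrow> 'a \<Rightarrow> 'a \<Rightarrow> bool" where
  "is_resolvent_pt A lam x z \<longleftrightarrow> tmem z (tscale (1 / lam) (logm z x)) (A z)"

definition resolvent :: "('a::metric_space \<Rightarrow> 'a tvec set) \<Rightarrow> real \<Rightarrow> 'a \<Rightarrow> 'a" where
  "resolvent A lam x = (THE z. is_resolvent_pt A lam x z)"

definition surjectivity_cond :: "('a::metric_space \<Rightarrow> 'a tvec set) \<Rightarrow> bool" where
  "surjectivity_cond A \<longleftrightarrow> (\<forall>lam>0. \<forall>x. \<exists>z. is_resolvent_pt A lam x z)"

definition yosida :: "('a::metric_space \<Rightarrow> 'a tvec set) \<Rightarrow> real \<Rightarrow> 'a \<Rightarrow> 'a tvec" where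
  "yosida A lam x = tscale (1 / lam) (logm (resolvent A lam x) x)"

text \<open>Borel measurability of a map into the separable metric space T_xX
 (equivalently: all distance functions to points of T_xX are measurable).\<close>
definition tmeasurable :: "'e measure \<Rightarrow> 'a::metric_space \<Rightarrow> ('e \<Rightarrow> 'a tvec) \<Rightarrow> bool" where
  "tmeasurable M x \<phi> \<longleftrightarrow> (\<forall>s\<in>space M. \<phi> s \<in> tangent x) \<and>
     (\<forall>v\<in>tangent x. (\<lambda>s. tdist x v (\<phi> s)) \<in> borel_measurable M)"

definition tbarycenter :: "'e measure \<Rightarrow> 'a::metric_space \<Rightarrow> ('e \<Rightarrow> 'a tvec) \<Rightarrow> 'a tvec \<Rightarrow> bool" where
  "tbarycenter M x \<phi> b \<longleftrightarrow> b \<in> tangent x \<and>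
     (\<forall>z\<in>tangent x. (\<integral>s. (tdist x b (\<phi> s))\<^sup>2 - (tdist x (\<phi> s) (tzero x))\<^sup>2 \<partial>M)
                   \<le> (\<integral>s. (tdist x z (\<phi> s))\<^sup>2 - (tdist x (\<phi> s) (tzero x))\<^sup>2 \<partial>M))"

definition selections :: "nat \<Rightarrow> 'e measure \<Rightarrow> ('e \<Rightarrow> 'a::metric_space \<Rightarrow> 'a tvec set) \<Rightarrow> 'a \<Rightarrow> ('e \<Rightarrow> 'a tvec) set" where
  "selections p M A x = {\<phi>. tmeasurable M x \<phi> \<and> (\<forall>s\<in>space M. tmem x (\<phi> s) (A s x)) \<and>
                            integrable M (\<lambda>s. (tnorm (\<phi> s)) ^ p)}"

definition mean_field_zero :: "'e measure \<Rightarrow> ('e \<Rightarrow> 'a::metric_space \<Rightarrow> 'a tvec set) \<Rightarrow> 'a \<Rightarrow> bool" where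
  "mean_field_zero M A x \<longleftrightarrow> (\<exists>\<phi>\<in>selections 1 M A x. tbarycenter M x \<phi> (tzero x))"

primrec spp_iter :: "('e \<Rightarrow> 'a::metric_space \<Rightarrow> 'a tvec set) \<Rightarrow> 'a \<Rightarrow> (nat \<Rightarrow> real)
    \<Rightarrow> (nat \<Rightarrow> 'w \<Rightarrow> 'e) \<Rightarrow> nat \<Rightarrow> 'w \<Rightarrow> 'a" where
  "spp_iter A x0 lam \<xi> 0 = (\<lambda>_. x0)"
| "spp_iter A x0 lam \<xi> (Suc n) = (\<lambda>\<omega>. resolvent (A (\<xi> (Suc n) \<omega>)) (lam n) (spp_iter A x0 lam \<xi> n \<omega>))"

definition filtr :: "'w measure \<Rightarrow> 'e measure \<Rightarrow> (nat \<Rightarrow> 'w \<Rightarrow> 'e) \<Rightarrow> nat \<Rightarrow> 'w measure" where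
  "filtr P M \<xi> n = sigma (space P)
     {\<xi> i -` B \<inter> space P | i B. i \<in> {1..n} \<and> B \<in> sets M}"

end

theory Submission
  imports Defs
begin


lemma geod_props:
  fixes x a :: "'a::complete_space"
  assumes H: "hadamard TYPE('a)"
  shows "geodesic_seg (geod x a) (dist x a) \<and> geod x a 0 = x \<and> geod x a (dist x a) = a"
proof -
  from H have "geodesic_space TYPE('a)" unfolding hadamard_def by simp
  then have "\<exists>\<gamma>. geodesic_seg \<gamma> (dist x a) \<and> \<gamma> 0 = x \<and> \<gamma> (dist x a) = a"
    unfolding geodesic_space_def by blast
  then show ?thesis unfolding geod_def by (rule someI_ex)
qed

lemma geod_dist2:
  fixes x a :: "'a::complete_space"
  assumes H: "hadamard TYPE('a)" and "0 \<le> s" "s \<le> dist x a" "0 \<le> t" "t \<le> dist x a"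
  shows "dist (geod x a s) (geod x a t) = \<bar>s - t\<bar>"
  using geod_props[OF H, of x a] assms unfolding geodesic_seg_def by auto

lemma geod_dist:
  fixes x a :: "'a::complete_space"
  assumes H: "hadamard TYPE('a)" and "0 \<le> s" "s \<le> dist x a"
  shows "dist x (geod x a s) = s"
proof -
  have "dist (geod x a 0) (geod x a s) = \<bar>0 - s\<bar>"
    using geod_dist2[OF H, of 0 x a s] assms by auto
  then show ?thesis using geod_props[OF H, of x a] assms by auto
qed

lemma geod_CAT0:
  fixes x a p :: "'a::complete_space"
  assumes H: "hadamard TYPE('a)" and s: "0 \<le> s" "s \<le> dist x a" and l: "0 \<le> l" "l \<le> 1"
  shows "(dist (geod x a (l * s)) p)\<^sup>2 \<le> (1 - l) * (dist x p)\<^sup>2 + l * (dist (geod x a s) p)\<^sup>2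
                                 - l * (1 - l) * s\<^sup>2"
proof -
  let ?g = "geod x a"
  have seg: "geodesic_seg ?g s"
    using geod_props[OF H, of x a] s unfolding geodesic_seg_def by auto
  from H have "CAT0_ineq TYPE('a)" unfolding hadamard_def by simp
  then have c: "\<forall>(\<gamma>::real \<Rightarrow> 'a) l x t. geodesic_seg \<gamma> l \<and> t \<in> {0..1} \<longrightarrow>
      (dist (\<gamma> (t * l)) x)\<^sup>2 \<le> (1 - t) * (dist (\<gamma> 0) x)\<^sup>2 + t * (dist (\<gamma> l) x)\<^sup>2
                                 - t * (1 - t) * (dist (\<gamma> 0) (\<gamma> l))\<^sup>2" unfolding CAT0_ineq_def by blast
  have "(dist (?g (l * s)) p)\<^sup>2 \<le> (1 - l) * (dist (?g 0) p)\<^sup>2 + l * (dist (?g s) p)\<^sup>2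
                                 - l * (1 - l) * (dist (?g 0) (?g s))\<^sup>2"
    using c[rule_format, of ?g s l p] seg l by simp
  moreover have "?g 0 = x" using geod_props[OF H, of x a] by simp
  moreover have "dist (?g 0) (?g s) = s" using geod_dist2[OF H, of 0 x a s] s by simp
  ultimately show ?thesis by simp
qed

lemma cangle_commute: "cangle x a b = cangle x b a"
  unfolding cangle_def by (simp add: dist_commute add.commute mult.commute mult.left_commute)

lemma cangle_ratio:
  fixes x p q :: "'a::metric_space"
  assumes "dist x p > 0" "dist x q > 0"
  shows "((dist x p)\<^sup>2 + (dist x q)\<^sup>2 - (dist p q)\<^sup>2) / (2 * dist x p * dist x q) \<in> {-1..1}"
proof -
  define s where "s = dist x p"
  define t where "t = dist x q"
  define d where "d = dist p q"
  have d1: "d \<le> s + t" unfolding s_def t_def d_def using dist_triangle3[of p q x] by (simp add: dist_commute)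
  have "s \<le> t + d" unfolding s_def t_def d_def using dist_triangle[of x p q] by (simp add: dist_commute)
  moreover have "t \<le> s + d" unfolding s_def t_def d_def using dist_triangle[of x q p] by (simp add: dist_commute)
  ultimately have d2: "\<bar>s - t\<bar> \<le> d" by linarith
  have pos: "2 * s * t > 0" using assms s_def t_def by simp
  have "d\<^sup>2 \<le> (s+t)\<^sup>2" using d1 by (intro power_mono) (auto simp: d_def)
  moreover have "\<bar>s-t\<bar>\<^sup>2 \<le> d\<^sup>2" using d2 by (intro power_mono) auto
  moreover have "(s+t)\<^sup>2 = s\<^sup>2 + t\<^sup>2 + 2 * s * t" by (simp add: power2_sum)
  moreover have "\<bar>s-t\<bar>\<^sup>2 = s\<^sup>2 + t\<^sup>2 - 2 * s * t" by (simp add: power2_diff)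
  ultimately have i1: "-(2 * s * t) \<le> s\<^sup>2 + t\<^sup>2 - d\<^sup>2" and i2: "s\<^sup>2 + t\<^sup>2 - d\<^sup>2 \<le> 2 * s * t"
    by linarith+
  have "-1 \<le> (s\<^sup>2 + t\<^sup>2 - d\<^sup>2) / (2 * s * t)" using i1 pos by (simp add: le_divide_eq)
  moreover have "(s\<^sup>2 + t\<^sup>2 - d\<^sup>2) / (2 * s * t) \<le> 1" using i2 pos by (simp add: divide_le_eq)
  ultimately show ?thesis unfolding s_def t_def d_def by simp
qed

lemma cangle_cos:
  fixes x p q :: "'a::metric_space"
  assumes "dist x p > 0" "dist x q > 0"
  shows "cos (cangle x p q) = ((dist x p)\<^sup>2 + (dist x q)\<^sup>2 - (dist p q)\<^sup>2) / (2 * dist x p * dist x q)"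
  using cangle_ratio[OF assms] unfolding cangle_def by (simp add: cos_arccos)

lemma cangle_range:
  fixes x p q :: "'a::metric_space"
  assumes "dist x p > 0" "dist x q > 0"
  shows "0 \<le> cangle x p q \<and> cangle x p q \<le> pi"
  using cangle_ratio[OF assms] unfolding cangle_def by (simp add: arccos_lbound arccos_ubound)

lemma cangle_dist:
  fixes x p q :: "'a::metric_space"
  assumes "dist x p > 0" "dist x q > 0"
  shows "(dist p q)\<^sup>2 = (dist x p)\<^sup>2 + (dist x q)\<^sup>2 - 2 * dist x p * dist x q * cos (cangle x p q)"
  using cangle_cos[OF assms] assms by (simp add: field_simps)

lemma cangle_mono1:
  fixes x a p :: "'a::complete_space"
  assumes H: "hadamard TYPE('a)" and px: "dist x p > 0" and s': "0 < s'" "s' \<le> s" and s: "s \<le> dist x a"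
  shows "cangle x (geod x a s') p \<le> cangle x (geod x a s) p"
proof -
  define l where "l = s' / s"
  have spos: "s > 0" using s' by simp
  have l: "0 < l" "l \<le> 1" using s' spos unfolding l_def by auto
  have s'l: "s' = l * s" using spos unfolding l_def by simp
  define D where "D = dist x p"
  define e where "e = dist (geod x a s) p"
  define e' where "e' = dist (geod x a s') p"
  have cat: "e'\<^sup>2 \<le> (1 - l) * D\<^sup>2 + l * e\<^sup>2 - l * (1 - l) * s\<^sup>2"
    using geod_CAT0[OF H, of s x a l p] spos s l unfolding e'_def e_def D_def s'l by simp
  have ds: "dist x (geod x a s) = s" using geod_dist[OF H, of s x a] spos s by simp
  have ds': "dist x (geod x a s') = s'" using geod_dist[OF H, of s' x a] s' s by simp
  define N where "N = s\<^sup>2 + D\<^sup>2 - e\<^sup>2"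
  define N' where "N' = s'\<^sup>2 + D\<^sup>2 - e'\<^sup>2"
  have "N' \<ge> l * N" using cat unfolding N_def N'_def s'l by (simp add: algebra_simps power2_eq_square)
  have Dpos: "D > 0" using px D_def by simp
  have "N / (2 * s * D) = (l * N) / (2 * s' * D)" using l spos Dpos unfolding s'l by (simp add: field_simps)
  also have "\<dots> \<le> N' / (2 * s' * D)"
    using \<open>N' \<ge> l * N\<close> s' Dpos by (intro divide_right_mono) auto
  finally have r: "N / (2 * s * D) \<le> N' / (2 * s' * D)" .
  have R: "N / (2 * s * D) \<in> {-1..1}" using cangle_ratio[of x "geod x a s" p] ds spos px
    unfolding N_def D_def e_def by simp
  have R': "N' / (2 * s' * D) \<in> {-1..1}" using cangle_ratio[of x "geod x a s'" p] ds' s' px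
    unfolding N'_def D_def e'_def by simp
  have "arccos (N' / (2 * s' * D)) \<le> arccos (N / (2 * s * D))"
    using R R' r by (intro arccos_le_arccos) auto
  then show ?thesis unfolding cangle_def ds ds' N_def N'_def D_def e_def e'_def .
qed

lemma cangle_mono2:
  fixes x a p :: "'a::complete_space"
  assumes H: "hadamard TYPE('a)" and px: "dist x p > 0" and s': "0 < s'" "s' \<le> s" and s: "s \<le> dist x a"
  shows "cangle x p (geod x a s') \<le> cangle x p (geod x a s)"
  using cangle_mono1[OF assms] by (simp add: cangle_commute)

lemma alex_inf:
  fixes x a b :: "'a::complete_space"
  assumes H: "hadamard TYPE('a)" and ax: "a \<noteq> x" and bx: "b \<noteq> x"
  shows "(\<forall>s t. 0 < s \<longrightarrow> s \<le> dist x a \<longrightarrow> 0 < t \<longrightarrow> t \<le> dist x b \<longrightarrow>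
            alex_angle x a b \<le> cangle x (geod x a s) (geod x b t))
     \<and> (\<forall>e>0. \<exists>\<eta>>0. \<eta> \<le> dist x a \<and> \<eta> \<le> dist x b \<and> (\<forall>s t. 0 < s \<longrightarrow> s < \<eta> \<longrightarrow> 0 < t \<longrightarrow> t < \<eta> \<longrightarrow>
            cangle x (geod x a s) (geod x b t) < alex_angle x a b + e))"
proof -
  define f where "f = (\<lambda>(s, t). cangle x (geod x a s) (geod x b t))"
  define da where "da = dist x a"
  define db where "db = dist x b"
  have da: "da > 0" using ax unfolding da_def by (simp add: dist_commute)
  have db: "db > 0" using bx unfolding db_def by (simp add: dist_commute)
  define S where "S = f ` ({0<..da} \<times> {0<..db})"
  define L where "L = Inf S"
  have f_nn: "f (s, t) \<ge> 0" if "0 < s" "s \<le> da" "0 < t" "t \<le> db" for s t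
  proof -
    have "dist x (geod x a s) = s" "dist x (geod x b t) = t"
      using geod_dist[OF H, of s x a] geod_dist[OF H, of t x b] that da_def db_def by auto
    then show ?thesis unfolding f_def using cangle_range[of x "geod x a s" "geod x b t"] that by auto
  qed
  have Sne: "S \<noteq> {}" unfolding S_def using da db by auto
  have Sbdd: "bdd_below S"
  proof (rule bdd_belowI)
    fix y assume "y \<in> S" then show "0 \<le> y" unfolding S_def using f_nn by auto
  qed
  have lower: "L \<le> f (s, t)" if "0 < s" "s \<le> da" "0 < t" "t \<le> db" for s t
    unfolding L_def S_def using that Sbdd S_def by (intro cInf_lower) auto
  have fmono: "f (s, t) \<le> f (s0, t0)" if "0 < s" "s \<le> s0" "s0 \<le> da" "0 < t" "t \<le> t0" "t0 \<le> db"
    for s t s0 t0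
  proof -
    have dt: "dist x (geod x b t) > 0"
      using geod_dist[OF H, of t x b] that db_def by auto
    have ds0: "dist x (geod x a s0) > 0"
      using geod_dist[OF H, of s0 x a] that da_def by auto
    have "f (s, t) \<le> f (s0, t)" unfolding f_def using cangle_mono1[OF H dt, of s s0 a] that da_def by simp
    also have "\<dots> \<le> f (s0, t0)" unfolding f_def using cangle_mono2[OF H ds0, of t t0 b] that db_def by simp
    finally show ?thesis .
  qed
  have small: "\<exists>\<eta>>0. \<eta> \<le> da \<and> \<eta> \<le> db \<and> (\<forall>s t. 0 < s \<longrightarrow> s < \<eta> \<longrightarrow> 0 < t \<longrightarrow> t < \<eta> \<longrightarrow> f (s, t) < L + e)"
    if e: "e > 0" for e
  proof -
    have "Inf S < L + e" using e L_def by simp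
    then obtain y where "y \<in> S" "y < L + e" using cInf_lessD[OF Sne] by blast
    then obtain s0 t0 where st0: "0 < s0" "s0 \<le> da" "0 < t0" "t0 \<le> db" "f (s0, t0) < L + e"
      unfolding S_def by auto
    show ?thesis
    proof (intro exI[of _ "min s0 t0"] conjI allI impI)
      fix s t assume "0 < s" "s < min s0 t0" "0 < t" "t < min s0 t0"
      then have "f (s, t) \<le> f (s0, t0)" using st0 by (intro fmono) auto
      then show "f (s, t) < L + e" using st0 by simp
    qed (use st0 in auto)
  qed
  have lim: "(f \<longlongrightarrow> L) (at_right 0 \<times>\<^sub>F at_right 0)"
  proof (rule tendstoI)
    fix e :: real assume e: "e > 0"
    obtain \<eta> where \<eta>: "\<eta> > 0" "\<eta> \<le> da" "\<eta> \<le> db"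
      "\<And>s t. 0 < s \<Longrightarrow> s < \<eta> \<Longrightarrow> 0 < t \<Longrightarrow> t < \<eta> \<Longrightarrow> f (s, t) < L + e"
      using small[OF e] by blast
    have ev: "eventually (\<lambda>s. s \<in> {0<..<\<eta>}) (at_right (0::real))"
      using eventually_at_right_real[OF \<eta>(1)] .
    show "eventually (\<lambda>z. dist (f z) L < e) (at_right 0 \<times>\<^sub>F at_right 0)"
      unfolding eventually_prod_filter
    proof (intro exI conjI)
      show "\<forall>s t. s \<in> {0<..<\<eta>} \<longrightarrow> t \<in> {0<..<\<eta>} \<longrightarrow> dist (f (s, t)) L < e"
      proof (intro allI impI)
        fix s t :: real assume "s \<in> {0<..<\<eta>}" "t \<in> {0<..<\<eta>}"
        then have "f (s, t) < L + e" "L \<le> f (s, t)" using \<eta> by (auto intro!: lower)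
        then show "dist (f (s, t)) L < e" by (simp add: dist_real_def)
      qed
    qed (use ev in auto)
  qed
  have nt: "at_right (0::real) \<times>\<^sub>F at_right (0::real) \<noteq> bot"
    proof -
    have "at_right (0::real) \<noteq> bot" using trivial_limit_at_right_real[of 0] unfolding trivial_limit_def .
    then show ?thesis by (simp add: prod_filter_eq_bot)
  qed
  have eqL: "alex_angle x a b = L" unfolding alex_angle_def f_def[symmetric]
    using tendsto_Lim[OF nt lim] .
  show ?thesis
  proof (intro conjI allI impI)
    fix s t :: real assume st: "0 < s" "s \<le> dist x a" "0 < t" "t \<le> dist x b"
    show "alex_angle x a b \<le> cangle x (geod x a s) (geod x b t)"
      using lower[of s t] st eqL unfolding f_def da_def db_def by simp
  next
    fix e :: real assume "e > 0"
    then show "\<exists>\<eta>>0. \<eta> \<le> dist x a \<and> \<eta> \<le> dist x b \<and> (\<forall>s t. 0 < s \<longrightarrow> s < \<eta> \<longrightarrow> 0 < t \<longrightarrow> t < \<eta> \<longrightarrow>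
            cangle x (geod x a s) (geod x b t) < alex_angle x a b + e)"
      using small[of e] eqL unfolding f_def da_def db_def by simp
  qed
qed

lemma geod_pos_dist:
  fixes x a :: "'a::complete_space"
  assumes H: "hadamard TYPE('a)" and "0 < s" "s \<le> dist x a"
  shows "dist x (geod x a s) > 0"
  using geod_dist[OF H, of s x a] assms by simp

lemma alex_le_cangle:
  fixes x a b :: "'a::complete_space"
  assumes H: "hadamard TYPE('a)" and ax: "a \<noteq> x" and bx: "b \<noteq> x"
  shows "alex_angle x a b \<le> cangle x a b"
proof -
  have "alex_angle x a b \<le> cangle x (geod x a (dist x a)) (geod x b (dist x b))"
    using alex_inf[OF H ax bx] ax bx by auto
  then show ?thesis using geod_props[OF H, of x a] geod_props[OF H, of x b] by simp
qed

lemma alex_nonneg: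
  fixes x a b :: "'a::complete_space"
  assumes H: "hadamard TYPE('a)" and ax: "a \<noteq> x" and bx: "b \<noteq> x"
  shows "0 \<le> alex_angle x a b"
proof (rule ccontr)
  assume "\<not> 0 \<le> alex_angle x a b"
  then have e: "- alex_angle x a b > 0" by simp
  obtain \<eta> where \<eta>: "\<eta> > 0" "\<eta> \<le> dist x a" "\<eta> \<le> dist x b"
    "\<And>s t. 0 < s \<Longrightarrow> s < \<eta> \<Longrightarrow> 0 < t \<Longrightarrow> t < \<eta> \<Longrightarrow>
      cangle x (geod x a s) (geod x b t) < alex_angle x a b + - alex_angle x a b"
    using conjunct2[OF alex_inf[OF H ax bx], rule_format, OF e] by blast
  have "cangle x (geod x a (\<eta>/2)) (geod x b (\<eta>/2)) < 0" using \<eta>(4)[of "\<eta>/2" "\<eta>/2"] \<eta>(1) by simp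
  moreover have "0 \<le> cangle x (geod x a (\<eta>/2)) (geod x b (\<eta>/2))"
    using cangle_range[OF geod_pos_dist[OF H] geod_pos_dist[OF H]] \<eta> by simp
  ultimately show False by simp
qed

lemma alex_le_pi:
  fixes x a b :: "'a::complete_space"
  assumes H: "hadamard TYPE('a)" and ax: "a \<noteq> x" and bx: "b \<noteq> x"
  shows "alex_angle x a b \<le> pi"
  using alex_le_cangle[OF assms] cangle_range[of x a b] ax bx by (simp add: dist_commute)

lemma alex_self:
  fixes x a :: "'a::complete_space"
  assumes H: "hadamard TYPE('a)" and ax: "a \<noteq> x"
  shows "alex_angle x a a = 0"
proof -
  have "cangle x a a = 0" unfolding cangle_def using ax
    by (simp add: power2_eq_square field_simps)
  then show ?thesis using alex_le_cangle[OF H ax ax] alex_nonneg[OF H ax ax] by simp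
qed

lemma alex_commute_le:
  fixes x a b :: "'a::complete_space"
  assumes H: "hadamard TYPE('a)" and ax: "a \<noteq> x" and bx: "b \<noteq> x"
  shows "alex_angle x a b \<le> alex_angle x b a"
proof (rule field_le_epsilon)
  fix e :: real assume e: "0 < e"
  obtain \<eta> where \<eta>: "\<eta> > 0" "\<eta> \<le> dist x b" "\<eta> \<le> dist x a"
    "\<And>s t. 0 < s \<Longrightarrow> s < \<eta> \<Longrightarrow> 0 < t \<Longrightarrow> t < \<eta> \<Longrightarrow>
      cangle x (geod x b s) (geod x a t) < alex_angle x b a + e"
    using conjunct2[OF alex_inf[OF H bx ax], rule_format, OF e] by blast
  have "alex_angle x a b \<le> cangle x (geod x a (\<eta>/2)) (geod x b (\<eta>/2))"
    using conjunct1[OF alex_inf[OF H ax bx]] \<eta> by simp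
  also have "\<dots> = cangle x (geod x b (\<eta>/2)) (geod x a (\<eta>/2))" by (rule cangle_commute)
  also have "\<dots> < alex_angle x b a + e" using \<eta>(4)[of "\<eta>/2" "\<eta>/2"] \<eta>(1) by simp
  finally show "alex_angle x a b \<le> alex_angle x b a + e" by simp
qed

lemma alex_commute:
  fixes x a b :: "'a::complete_space"
  assumes H: "hadamard TYPE('a)" and ax: "a \<noteq> x" and bx: "b \<noteq> x"
  shows "alex_angle x a b = alex_angle x b a"
  using alex_commute_le[OF H ax bx] alex_commute_le[OF H bx ax] by simp

lemma cmod_cis_diff:
  "(cmod (complex_of_real r1 * cis a - complex_of_real r2 * cis b))\<^sup>2
     = r1\<^sup>2 + r2\<^sup>2 - 2 * r1 * r2 * cos (a - b)"
proof -
  have "(cmod (complex_of_real r1 * cis a - complex_of_real r2 * cis b))\<^sup>2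
      = (r1 * cos a - r2 * cos b)\<^sup>2 + (r1 * sin a - r2 * sin b)\<^sup>2"
    by (simp add: cmod_power2)
  also have "\<dots> = r1\<^sup>2 * ((sin a)\<^sup>2 + (cos a)\<^sup>2) + r2\<^sup>2 * ((sin b)\<^sup>2 + (cos b)\<^sup>2)
       - 2 * r1 * r2 * (cos a * cos b + sin a * sin b)"
    by algebra
  also have "\<dots> = r1\<^sup>2 + r2\<^sup>2 - 2 * r1 * r2 * cos (a - b)"
    unfolding sin_cos_squared_add cos_diff by simp
  finally show ?thesis .
qed

lemma cos_bound_dist:
  fixes x p q :: "'a::metric_space"
  assumes "dist x p > 0" "dist x q > 0" "cangle x p q \<le> \<theta>" "\<theta> \<le> pi"
  shows "(dist p q)\<^sup>2 \<le> (dist x p)\<^sup>2 + (dist x q)\<^sup>2 - 2 * dist x p * dist x q * cos \<theta>"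
proof -
  have "cos \<theta> \<le> cos (cangle x p q)"
    using cangle_range[OF assms(1,2)] assms(3,4) by (intro cos_monotone_0_pi_le) auto
  then have "dist x p * dist x q * cos \<theta> \<le> dist x p * dist x q * cos (cangle x p q)"
    using assms(1,2) by (intro mult_left_mono) auto
  then show ?thesis using cangle_dist[OF assms(1,2)] by simp
qed

lemma cos_bound_dist_strict:
  fixes x p q :: "'a::metric_space"
  assumes "dist x p > 0" "dist x q > 0" "\<theta> < cangle x p q" "0 \<le> \<theta>"
  shows "(dist p q)\<^sup>2 > (dist x p)\<^sup>2 + (dist x q)\<^sup>2 - 2 * dist x p * dist x q * cos \<theta>"
proof -
  have "cos (cangle x p q) < cos \<theta>"
    using cangle_range[OF assms(1,2)] assms(3,4) by (intro cos_monotone_0_pi) auto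
  then have "dist x p * dist x q * cos (cangle x p q) < dist x p * dist x q * cos \<theta>"
    using assms(1,2) by (intro mult_strict_left_mono) auto
  then show ?thesis using cangle_dist[OF assms(1,2)] by simp
qed

lemma alex_triangle:
  fixes x a b c :: "'a::complete_space"
  assumes H: "hadamard TYPE('a)" and ax: "a \<noteq> x" and bx: "b \<noteq> x" and cx: "c \<noteq> x"
  shows "alex_angle x a b \<le> alex_angle x a c + alex_angle x c b"
proof (rule ccontr)
  define A where "A = alex_angle x a c"
  define B where "B = alex_angle x c b"
  define C where "C = alex_angle x a b"
  assume "\<not> alex_angle x a b \<le> alex_angle x a c + alex_angle x c b"
  then have CAB: "C > A + B" unfolding A_def B_def C_def by simp
  define \<delta> where "\<delta> = (C - A - B) / 4"
  have \<delta>: "\<delta> > 0" using CAB unfolding \<delta>_def by simp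
  have A0: "A \<ge> 0" unfolding A_def using alex_nonneg[OF H ax cx] .
  have B0: "B \<ge> 0" unfolding B_def using alex_nonneg[OF H cx bx] .
  have Cpi: "C \<le> pi" unfolding C_def using alex_le_pi[OF H ax bx] .
  obtain \<eta>1 where \<eta>1: "\<eta>1 > 0" "\<eta>1 \<le> dist x a" "\<eta>1 \<le> dist x c"
    "\<And>s t. 0 < s \<Longrightarrow> s < \<eta>1 \<Longrightarrow> 0 < t \<Longrightarrow> t < \<eta>1 \<Longrightarrow>
      cangle x (geod x a s) (geod x c t) < A + \<delta>"
    using conjunct2[OF alex_inf[OF H ax cx], rule_format, OF \<delta>] unfolding A_def by blast
  obtain \<eta>2 where \<eta>2: "\<eta>2 > 0" "\<eta>2 \<le> dist x c" "\<eta>2 \<le> dist x b"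
    "\<And>s t. 0 < s \<Longrightarrow> s < \<eta>2 \<Longrightarrow> 0 < t \<Longrightarrow> t < \<eta>2 \<Longrightarrow>
      cangle x (geod x c s) (geod x b t) < B + \<delta>"
    using conjunct2[OF alex_inf[OF H cx bx], rule_format, OF \<delta>] unfolding B_def by blast
  define t where "t = min \<eta>1 \<eta>2 / 2"
  have t: "0 < t" "t < \<eta>1" "t < \<eta>2" using \<eta>1 \<eta>2 unfolding t_def by auto
  define \<alpha> where "\<alpha> = C - \<delta>"
  define \<theta> where "\<theta> = A + \<delta>"
  have th0: "0 < \<theta>" using A0 \<delta> unfolding \<theta>_def by simp
  have tha: "\<theta> < \<alpha>" using CAB B0 unfolding \<theta>_def \<alpha>_def \<delta>_def by (simp add: field_simps)
  have api: "\<alpha> < pi" using Cpi \<delta> unfolding \<alpha>_def by simp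
  have amt: "\<alpha> - \<theta> = B + 2 * \<delta>" unfolding \<alpha>_def \<theta>_def \<delta>_def by (simp add: field_simps)
  define sa where "sa = sin \<theta>"
  define sb where "sb = sin (\<alpha> - \<theta>)"
  define sal where "sal = sin \<alpha>"
  have sa: "sa > 0" unfolding sa_def using th0 tha api by (intro sin_gt_zero) auto
  have sb: "sb > 0" unfolding sb_def using th0 tha api by (intro sin_gt_zero) auto
  have sal: "sal > 0" unfolding sal_def using th0 tha api by (intro sin_gt_zero) auto
  define Den where "Den = t * sa + t * sb"
  have Den: "Den > 0" unfolding Den_def using t sa sb by (simp add: add_pos_pos)
  define t' where "t' = t * t * sal / Den"
  define m where "m = t * sa / Den"
  have t'pos: "t' > 0" unfolding t'_def using t sal Den by simp
  have m01: "0 \<le> m" "m \<le> 1" unfolding m_def using t sa sb Den unfolding Den_def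
    by (auto simp: divide_le_eq)
  have sin_add_le: "sal \<le> sa + sb"
  proof -
    have "sal = sin (\<theta> + (\<alpha> - \<theta>))" unfolding sal_def by simp
    also have "\<dots> = sa * cos (\<alpha> - \<theta>) + cos \<theta> * sb" unfolding sa_def sb_def using sin_add[of \<theta> "\<alpha> - \<theta>"] by simp
    also have "\<dots> \<le> sa * 1 + 1 * sb"
      using sa sb by (intro add_mono mult_left_mono mult_right_mono) auto
    finally show ?thesis by simp
  qed
  have t't: "t' \<le> t"
  proof -
    have "t * sal \<le> t * (sa + sb)" using sin_add_le t by (intro mult_left_mono) auto
    then have "t * sal \<le> Den" unfolding Den_def by (simp add: algebra_simps)
    then have "t * (t * sal) \<le> t * Den" using t by (intro mult_left_mono) auto
    then show ?thesis unfolding t'_def using Den by (simp add: divide_le_eq mult.assoc)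
  qed
  define x0 where "x0 = complex_of_real t * cis 0"
  define x2 where "x2 = complex_of_real t * cis \<alpha>"
  define y where "y = complex_of_real t' * cis \<theta>"
  have yeq: "y = complex_of_real (1 - m) * x0 + complex_of_real m * x2"
  proof (rule complex_eqI)
    have e1: "sal * cos \<theta> = sb + sa * cos \<alpha>" unfolding sal_def sb_def sa_def
      by (simp add: sin_diff algebra_simps)
    have m1: "1 - m = t * sb / Den" using Den unfolding m_def Den_def by (simp add: field_simps)
    have "t' * cos \<theta> = t * t * (sal * cos \<theta>) / Den" unfolding t'_def by simp
    also have "\<dots> = t * t * (sb + sa * cos \<alpha>) / Den" using e1 by simp
    also have "\<dots> = (t * sb / Den) * t + (t * sa / Den) * t * cos \<alpha>" using Den
      by (simp add: field_simps)
    finally have "t' * cos \<theta> = (1 - m) * t + m * t * cos \<alpha>" using m1 unfolding m_def by simp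
    then show "Re y = Re (complex_of_real (1 - m) * x0 + complex_of_real m * x2)"
      unfolding y_def x0_def x2_def by simp
    have "t' * sin \<theta> = m * t * sin \<alpha>"
      unfolding t'_def m_def sa_def sal_def by (simp add: field_simps)
    then show "Im y = Im (complex_of_real (1 - m) * x0 + complex_of_real m * x2)"
      unfolding y_def x0_def x2_def by simp
  qed
  have seg: "cmod (x0 - y) + cmod (y - x2) = cmod (x0 - x2)"
  proof -
    have e1: "x0 - y = complex_of_real m * (x0 - x2)" using yeq by (simp add: algebra_simps)
    have e2: "y - x2 = complex_of_real (1 - m) * (x0 - x2)" using yeq by (simp add: algebra_simps)
    have n1: "cmod (x0 - y) = m * cmod (x0 - x2)" unfolding e1 norm_mult norm_of_real using m01 by simp
    have n2: "cmod (y - x2) = (1 - m) * cmod (x0 - x2)" unfolding e2 norm_mult norm_of_real using m01 by simp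
    show ?thesis unfolding n1 n2 by (simp add: algebra_simps)
  qed
  define p where "p = geod x a t"
  define q where "q = geod x c t'"
  define r where "r = geod x b t"
  have dp: "dist x p = t" unfolding p_def using geod_dist[OF H, of t x a] t \<eta>1 by simp
  have dq: "dist x q = t'" unfolding q_def using geod_dist[OF H, of t' x c] t'pos t't t \<eta>1 by simp
  have dr: "dist x r = t" unfolding r_def using geod_dist[OF H, of t x b] t \<eta>2 by simp
  have dpp: "dist x p > 0" using dp t by simp
  have dqp: "dist x q > 0" using dq t'pos by simp
  have drp: "dist x r > 0" using dr t by simp
  have "cangle x p q < \<theta>" unfolding p_def q_def \<theta>_def by (rule \<eta>1(4)) (use t t'pos t't in auto)
  then have "(dist p q)\<^sup>2 \<le> (dist x p)\<^sup>2 + (dist x q)\<^sup>2 - 2 * dist x p * dist x q * cos \<theta>"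
    by (intro cos_bound_dist dpp dqp) (use tha api in auto)
  also have "\<dots> = (cmod (x0 - y))\<^sup>2" unfolding x0_def y_def cmod_cis_diff dp dq by simp
  finally have d1: "dist p q \<le> cmod (x0 - y)" by (rule power2_le_imp_le) simp
  have "cangle x q r < B + \<delta>" unfolding q_def r_def by (rule \<eta>2(4)) (use t t'pos t't in auto)
  then have "cangle x q r \<le> \<alpha> - \<theta>" using amt \<delta> by simp
  then have "(dist q r)\<^sup>2 \<le> (dist x q)\<^sup>2 + (dist x r)\<^sup>2 - 2 * dist x q * dist x r * cos (\<alpha> - \<theta>)"
    by (intro cos_bound_dist dqp drp) (use tha th0 api in auto)
  also have "\<dots> = (cmod (y - x2))\<^sup>2" unfolding x2_def y_def cmod_cis_diff dq dr
    using cos_minus[of "\<alpha> - \<theta>"] by simp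
  finally have d2: "dist q r \<le> cmod (y - x2)" by (rule power2_le_imp_le) simp
  have "C \<le> cangle x p r" unfolding C_def p_def r_def
    using conjunct1[OF alex_inf[OF H ax bx], rule_format, of t t] t \<eta>1 \<eta>2 by linarith
  then have "\<alpha> < cangle x p r" using \<delta> unfolding \<alpha>_def by simp
  then have "(dist p r)\<^sup>2 > (dist x p)\<^sup>2 + (dist x r)\<^sup>2 - 2 * dist x p * dist x r * cos \<alpha>"
    by (intro cos_bound_dist_strict dpp drp) (use th0 tha in auto)
  moreover have "(dist x p)\<^sup>2 + (dist x r)\<^sup>2 - 2 * dist x p * dist x r * cos \<alpha> = (cmod (x0 - x2))\<^sup>2"
    unfolding x0_def x2_def cmod_cis_diff dp dr by simp
  ultimately have "(cmod (x0 - x2))\<^sup>2 < (dist p r)\<^sup>2" by linarith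
  then have d3: "cmod (x0 - x2) < dist p r" by (rule power2_less_imp_less) simp
  have "dist p r \<le> dist p q + dist q r" by (rule dist_triangle)
  also have "\<dots> \<le> cmod (x0 - x2)" using d1 d2 seg by linarith
  finally show False using d3 by simp
qed

section \<open>Directions\<close>

lemma alex_tri4:
  fixes x :: "'a::complete_space"
  assumes H: "hadamard TYPE('a)" and "a \<noteq> x" "b \<noteq> x" "c \<noteq> x" "d \<noteq> x"
  shows "alex_angle x a b \<le> alex_angle x a c + alex_angle x c d + alex_angle x d b"
  using alex_triangle[OF H assms(2,3,4)] alex_triangle[OF H assms(4,3,5)] by simp

lemma dir_conv:
  fixes x :: "'a::complete_space"
  assumes H: "hadamard TYPE('a)" and s: "dir_cauchy x \<sigma>" and t: "dir_cauchy x \<tau>"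
  shows "(\<lambda>n. alex_angle x (\<sigma> n) (\<tau> n)) \<longlonglongrightarrow> dir_angle x \<sigma> \<tau>"
proof -
  have sx: "\<And>n. \<sigma> n \<noteq> x" and tx: "\<And>n. \<tau> n \<noteq> x" using s t unfolding dir_cauchy_def by auto
  have "Cauchy (\<lambda>n. alex_angle x (\<sigma> n) (\<tau> n))"
  proof (rule metric_CauchyI)
    fix e :: real assume e: "0 < e"
    obtain N1 where N1: "\<And>m n. m \<ge> N1 \<Longrightarrow> n \<ge> N1 \<Longrightarrow> alex_angle x (\<sigma> m) (\<sigma> n) < e/2"
      using s e unfolding dir_cauchy_def by (meson half_gt_zero)
    obtain N2 where N2: "\<And>m n. m \<ge> N2 \<Longrightarrow> n \<ge> N2 \<Longrightarrow> alex_angle x (\<tau> m) (\<tau> n) < e/2"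
      using t e unfolding dir_cauchy_def by (meson half_gt_zero)
    show "\<exists>M. \<forall>m\<ge>M. \<forall>n\<ge>M. dist (alex_angle x (\<sigma> m) (\<tau> m)) (alex_angle x (\<sigma> n) (\<tau> n)) < e"
    proof (intro exI allI impI)
      fix m n assume m: "max N1 N2 \<le> m" and n: "max N1 N2 \<le> n"
      have "alex_angle x (\<sigma> m) (\<tau> m) \<le> alex_angle x (\<sigma> m) (\<sigma> n) + alex_angle x (\<sigma> n) (\<tau> n) + alex_angle x (\<tau> n) (\<tau> m)"
        using alex_tri4[OF H sx tx sx tx] by simp
      moreover have "alex_angle x (\<sigma> n) (\<tau> n) \<le> alex_angle x (\<sigma> n) (\<sigma> m) + alex_angle x (\<sigma> m) (\<tau> m) + alex_angle x (\<tau> m) (\<tau> n)"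
        using alex_tri4[OF H sx tx sx tx] by simp
      moreover have "alex_angle x (\<sigma> m) (\<sigma> n) < e/2" "alex_angle x (\<sigma> n) (\<sigma> m) < e/2"
        "alex_angle x (\<tau> m) (\<tau> n) < e/2" "alex_angle x (\<tau> n) (\<tau> m) < e/2"
        using N1 N2 m n by auto
      ultimately show "dist (alex_angle x (\<sigma> m) (\<tau> m)) (alex_angle x (\<sigma> n) (\<tau> n)) < e"
        unfolding dist_real_def by linarith
    qed
  qed
  then have "convergent (\<lambda>n. alex_angle x (\<sigma> n) (\<tau> n))" by (rule Cauchy_convergent)
  then show ?thesis unfolding dir_angle_def by (simp add: convergent_LIMSEQ_iff)
qed

lemma dir_range:
  fixes x :: "'a::complete_space"
  assumes H: "hadamard TYPE('a)" and s: "dir_cauchy x \<sigma>" and t: "dir_cauchy x \<tau>"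
  shows "0 \<le> dir_angle x \<sigma> \<tau> \<and> dir_angle x \<sigma> \<tau> \<le> pi"
proof -
  have sx: "\<And>n. \<sigma> n \<noteq> x" and tx: "\<And>n. \<tau> n \<noteq> x" using s t unfolding dir_cauchy_def by auto
  have L: "(\<lambda>n. alex_angle x (\<sigma> n) (\<tau> n)) \<longlonglongrightarrow> dir_angle x \<sigma> \<tau>" by (rule dir_conv[OF H s t])
  have "0 \<le> dir_angle x \<sigma> \<tau>" by (rule LIMSEQ_le_const[OF L]) (use alex_nonneg[OF H sx tx] in auto)
  moreover have "dir_angle x \<sigma> \<tau> \<le> pi" by (rule LIMSEQ_le_const2[OF L]) (use alex_le_pi[OF H sx tx] in auto)
  ultimately show ?thesis by simp
qed

lemma dir_triangle:
  fixes x :: "'a::complete_space"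
  assumes H: "hadamard TYPE('a)" and s: "dir_cauchy x \<sigma>" and t: "dir_cauchy x \<tau>" and r: "dir_cauchy x \<rho>"
  shows "dir_angle x \<sigma> \<rho> \<le> dir_angle x \<sigma> \<tau> + dir_angle x \<tau> \<rho>"
proof -
  have sx: "\<And>n. \<sigma> n \<noteq> x" and tx: "\<And>n. \<tau> n \<noteq> x" and rx: "\<And>n. \<rho> n \<noteq> x"
    using s t r unfolding dir_cauchy_def by auto
  show ?thesis
    by (rule LIMSEQ_le[OF dir_conv[OF H s r] tendsto_add[OF dir_conv[OF H s t] dir_conv[OF H t r]]])
       (use alex_triangle[OF H sx rx tx] in auto)
qed

lemma dir_commute:
  fixes x :: "'a::complete_space"
  assumes H: "hadamard TYPE('a)" and s: "dir_cauchy x \<sigma>" and t: "dir_cauchy x \<tau>"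
  shows "dir_angle x \<sigma> \<tau> = dir_angle x \<tau> \<sigma>"
proof -
  have sx: "\<And>n. \<sigma> n \<noteq> x" and tx: "\<And>n. \<tau> n \<noteq> x" using s t unfolding dir_cauchy_def by auto
  have "(\<lambda>n. alex_angle x (\<sigma> n) (\<tau> n)) = (\<lambda>n. alex_angle x (\<tau> n) (\<sigma> n))"
    using alex_commute[OF H sx tx] by auto
  then show ?thesis unfolding dir_angle_def by simp
qed

lemma dir_const:
  fixes x a b :: "'a::complete_space"
  shows "dir_angle x (\<lambda>_. a) (\<lambda>_. b) = alex_angle x a b"
  unfolding dir_angle_def by simp

lemma dir_cauchy_const:
  fixes x a :: "'a::complete_space"
  assumes H: "hadamard TYPE('a)" and ax: "a \<noteq> x"
  shows "dir_cauchy x (\<lambda>_. a)"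
  unfolding dir_cauchy_def using alex_self[OF H ax] ax by auto

section \<open>Tangent vectors\<close>

lemma tangent_fst: "u \<in> tangent x \<Longrightarrow> fst u \<ge> 0"
  unfolding tangent_def by auto

lemma tangent_dir: "u \<in> tangent x \<Longrightarrow> fst u \<noteq> 0 \<Longrightarrow> dir_cauchy x (snd u)"
  unfolding tangent_def by auto

lemma tinner_commute:
  fixes x :: "'a::complete_space"
  assumes H: "hadamard TYPE('a)" and u: "u \<in> tangent x" and v: "v \<in> tangent x"
  shows "tinner x u v = tinner x v u"
proof (cases "fst u = 0 \<or> fst v = 0")
  case True then show ?thesis unfolding tinner_def by auto
next
  case False
  then show ?thesis unfolding tinner_def
    using dir_commute[OF H tangent_dir[OF u] tangent_dir[OF v]] by simp
qed

lemma tinner_abs: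
  fixes x :: "'a::complete_space"
  assumes u: "u \<in> tangent x" and v: "v \<in> tangent x"
  shows "\<bar>tinner x u v\<bar> \<le> fst u * fst v"
proof -
  have "\<bar>tinner x u v\<bar> = fst u * fst v * \<bar>cos (dir_angle x (snd u) (snd v))\<bar>"
    unfolding tinner_def using tangent_fst[OF u] tangent_fst[OF v] by (simp add: abs_mult)
  also have "\<dots> \<le> fst u * fst v * 1"
    using tangent_fst[OF u] tangent_fst[OF v] by (intro mult_left_mono) auto
  finally show ?thesis by simp
qed

lemma tdist_expr_nonneg:
  fixes x :: "'a::complete_space"
  assumes u: "u \<in> tangent x" and v: "v \<in> tangent x"
  shows "(fst u)\<^sup>2 + (fst v)\<^sup>2 - 2 * tinner x u v \<ge> (fst u - fst v)\<^sup>2"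
proof -
  have "tinner x u v \<le> fst u * fst v" using tinner_abs[OF u v] by simp
  then show ?thesis by (simp add: power2_diff)
qed

lemma tdist_sq:
  fixes x :: "'a::complete_space"
  assumes u: "u \<in> tangent x" and v: "v \<in> tangent x"
  shows "(tdist x u v)\<^sup>2 = (fst u)\<^sup>2 + (fst v)\<^sup>2 - 2 * tinner x u v" and "tdist x u v \<ge> 0"
proof -
  have "(fst u)\<^sup>2 + (fst v)\<^sup>2 - 2 * tinner x u v \<ge> 0"
    using tdist_expr_nonneg[OF u v] by (meson order_trans zero_le_power2)
  then show "(tdist x u v)\<^sup>2 = (fst u)\<^sup>2 + (fst v)\<^sup>2 - 2 * tinner x u v" "tdist x u v \<ge> 0"
    unfolding tdist_def by simp_all
qed

lemma tdist_zero_transfer: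
  fixes x :: "'a::complete_space"
  assumes H: "hadamard TYPE('a)" and u: "u \<in> tangent x" and v: "v \<in> tangent x" and w: "w \<in> tangent x"
    and d0: "tdist x u v = 0"
  shows "tinner x u w = tinner x v w"
proof -
  have E: "(fst u)\<^sup>2 + (fst v)\<^sup>2 - 2 * tinner x u v = 0" using tdist_sq[OF u v] d0 by simp
  then have "(fst u - fst v)\<^sup>2 \<le> 0" using tdist_expr_nonneg[OF u v] by simp
  then have eq: "fst u = fst v" by simp
  show ?thesis
  proof (cases "fst u = 0 \<or> fst w = 0")
    case True then show ?thesis unfolding tinner_def using eq by auto
  next
    case False
    then have fu: "fst u > 0" and fw: "fst w \<noteq> 0" using tangent_fst[OF u] by auto
    have su: "dir_cauchy x (snd u)" using tangent_dir[OF u] fu by simp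
    have sv: "dir_cauchy x (snd v)" using tangent_dir[OF v] fu eq by simp
    have sw: "dir_cauchy x (snd w)" using tangent_dir[OF w] fw by simp
    have "2 * (fst u)\<^sup>2 * (1 - cos (dir_angle x (snd u) (snd v))) = 0"
      using E eq unfolding tinner_def by (simp add: power2_eq_square algebra_simps)
    then have c1: "cos (dir_angle x (snd u) (snd v)) = 1" using fu by simp
    have r: "0 \<le> dir_angle x (snd u) (snd v)" "dir_angle x (snd u) (snd v) \<le> pi"
      using dir_range[OF H su sv] by auto
    have z: "dir_angle x (snd u) (snd v) = 0"
    proof (rule ccontr)
      assume "dir_angle x (snd u) (snd v) \<noteq> 0"
      then have "cos (dir_angle x (snd u) (snd v)) < cos 0"
        using r by (intro cos_monotone_0_pi) auto
      then show False using c1 by simp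
    qed
    have "dir_angle x (snd u) (snd w) \<le> dir_angle x (snd u) (snd v) + dir_angle x (snd v) (snd w)"
      by (rule dir_triangle[OF H su sv sw])
    moreover have "dir_angle x (snd v) (snd w) \<le> dir_angle x (snd v) (snd u) + dir_angle x (snd u) (snd w)"
      by (rule dir_triangle[OF H sv su sw])
    moreover have "dir_angle x (snd v) (snd u) = 0" using z dir_commute[OF H su sv] by simp
    ultimately have "dir_angle x (snd u) (snd w) = dir_angle x (snd v) (snd w)" using z by simp
    then show ?thesis unfolding tinner_def using eq by simp
  qed
qed

lemma trig_lip:
  fixes r q \<alpha> \<beta> \<gamma> :: real
  assumes "0 \<le> r" "0 \<le> q" "\<bar>\<alpha> - \<beta>\<bar> \<le> \<gamma>" "\<gamma> \<le> pi"
  shows "(r * cos \<alpha> - q * cos \<beta>)\<^sup>2 \<le> r\<^sup>2 + q\<^sup>2 - 2 * r * q * cos \<gamma>"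
proof -
  have "cos \<gamma> \<le> cos \<bar>\<alpha> - \<beta>\<bar>" using assms by (intro cos_monotone_0_pi_le) auto
  also have "cos \<bar>\<alpha> - \<beta>\<bar> = cos (\<alpha> - \<beta>)"
    using cos_minus[of "\<alpha> - \<beta>"] by (simp add: abs_if)
  finally have c: "r * q * cos \<gamma> \<le> r * q * cos (\<alpha> - \<beta>)" using assms by (intro mult_left_mono) auto
  have "r\<^sup>2 + q\<^sup>2 - 2 * r * q * cos (\<alpha> - \<beta>) = (cmod (complex_of_real r * cis \<alpha> - complex_of_real q * cis \<beta>))\<^sup>2"
    by (simp add: cmod_cis_diff)
  also have "\<dots> = (r * cos \<alpha> - q * cos \<beta>)\<^sup>2 + (r * sin \<alpha> - q * sin \<beta>)\<^sup>2"
    by (simp add: cmod_power2)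
  finally have "(r * cos \<alpha> - q * cos \<beta>)\<^sup>2 \<le> r\<^sup>2 + q\<^sup>2 - 2 * r * q * cos (\<alpha> - \<beta>)" by simp
  then show ?thesis using c by simp
qed

lemma tinner_lip:
  fixes x :: "'a::complete_space"
  assumes H: "hadamard TYPE('a)" and f: "f \<in> tangent x" and a: "a \<in> tangent x" and b: "b \<in> tangent x"
  shows "\<bar>tinner x f a - tinner x f b\<bar> \<le> fst f * tdist x a b"
proof -
  have td: "(tdist x a b)\<^sup>2 = (fst a)\<^sup>2 + (fst b)\<^sup>2 - 2 * tinner x a b" "tdist x a b \<ge> 0"
    using tdist_sq[OF a b] by auto
  have f0: "fst f \<ge> 0" using tangent_fst[OF f] .
  show ?thesis
  proof (cases "fst f = 0")
    case True then show ?thesis unfolding tinner_def by simp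
  next
    case fnz: False
    show ?thesis
    proof (cases "fst a = 0 \<or> fst b = 0")
      case True
      then have "\<bar>tinner x f a - tinner x f b\<bar> \<le> fst f * \<bar>fst a - fst b\<bar>"
        using tinner_abs[OF f a] tinner_abs[OF f b] tangent_fst[OF a] tangent_fst[OF b]
        unfolding tinner_def by auto
      moreover have "\<bar>fst a - fst b\<bar> \<le> tdist x a b"
      proof -
        have "tinner x a b = 0" using True unfolding tinner_def by auto
        then have "(tdist x a b)\<^sup>2 = (fst a - fst b)\<^sup>2" using td True by (auto simp: power2_eq_square)
        then show ?thesis using td(2) by (metis abs_of_nonneg order.refl real_sqrt_abs real_sqrt_unique)
      qed
      ultimately show ?thesis using f0 by (meson mult_left_mono order_trans)
    next
      case False
      have sf: "dir_cauchy x (snd f)" using tangent_dir[OF f] fnz by simp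
      have sa: "dir_cauchy x (snd a)" using tangent_dir[OF a] False by simp
      have sb: "dir_cauchy x (snd b)" using tangent_dir[OF b] False by simp
      define \<alpha> where "\<alpha> = dir_angle x (snd f) (snd a)"
      define \<beta> where "\<beta> = dir_angle x (snd f) (snd b)"
      define \<gamma> where "\<gamma> = dir_angle x (snd a) (snd b)"
      have t1: "\<alpha> \<le> \<beta> + \<gamma>" unfolding \<alpha>_def \<beta>_def \<gamma>_def
        using dir_triangle[OF H sf sb sa] dir_commute[OF H sa sb] by simp
      have t2: "\<beta> \<le> \<alpha> + \<gamma>" unfolding \<alpha>_def \<beta>_def \<gamma>_def
        using dir_triangle[OF H sf sa sb] by simp
      have g: "\<gamma> \<le> pi" unfolding \<gamma>_def using dir_range[OF H sa sb] by simp
      have "(fst a * cos \<alpha> - fst b * cos \<beta>)\<^sup>2 \<le> (fst a)\<^sup>2 + (fst b)\<^sup>2 - 2 * fst a * fst b * cos \<gamma>"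
        using tangent_fst[OF a] tangent_fst[OF b] t1 t2 g by (intro trig_lip) auto
      also have "\<dots> = (tdist x a b)\<^sup>2" using td unfolding tinner_def \<gamma>_def by simp
      finally have "\<bar>fst a * cos \<alpha> - fst b * cos \<beta>\<bar> \<le> tdist x a b"
        using td(2) by (metis abs_of_nonneg real_sqrt_abs real_sqrt_le_mono)
      then have "fst f * \<bar>fst a * cos \<alpha> - fst b * cos \<beta>\<bar> \<le> fst f * tdist x a b"
        using f0 by (intro mult_left_mono) auto
      moreover have "tinner x f a - tinner x f b = fst f * (fst a * cos \<alpha> - fst b * cos \<beta>)"
        unfolding tinner_def \<alpha>_def \<beta>_def by (simp add: algebra_simps)
      then have "\<bar>tinner x f a - tinner x f b\<bar> = fst f * \<bar>fst a * cos \<alpha> - fst b * cos \<beta>\<bar>"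
        using f0 by (simp add: abs_mult)
      ultimately show ?thesis by simp
    qed
  qed
qed

lemma logm_tangent:
  fixes x a :: "'a::complete_space"
  assumes H: "hadamard TYPE('a)"
  shows "logm x a \<in> tangent x"
  unfolding tangent_def logm_def using dir_cauchy_const[OF H, of a x] by auto

lemma tzero_tangent: "tzero x \<in> tangent x"
  unfolding tangent_def tzero_def by auto

lemma tinner_logm:
  fixes x a b :: "'a::complete_space"
  assumes H: "hadamard TYPE('a)"
  shows "2 * tinner x (logm x a) (logm x b) \<ge> (dist x a)\<^sup>2 + (dist x b)\<^sup>2 - (dist a b)\<^sup>2"
proof (cases "a = x \<or> b = x")
  case True then show ?thesis unfolding tinner_def logm_def by (auto simp: dist_commute)
next
  case False
  then have ax: "a \<noteq> x" and bx: "b \<noteq> x" by auto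
  have da: "dist x a > 0" and db: "dist x b > 0" using ax bx by (auto simp: dist_commute)
  have "cos (cangle x a b) \<le> cos (alex_angle x a b)"
    using alex_le_cangle[OF H ax bx] alex_nonneg[OF H ax bx] cangle_range[OF da db]
    by (intro cos_monotone_0_pi_le) auto
  then have "dist x a * dist x b * cos (cangle x a b) \<le> dist x a * dist x b * cos (alex_angle x a b)"
    using da db by (intro mult_left_mono) auto
  moreover have "2 * (dist x a * dist x b * cos (cangle x a b)) = (dist x a)\<^sup>2 + (dist x b)\<^sup>2 - (dist a b)\<^sup>2"
    using cangle_dist[OF da db] by simp
  ultimately show ?thesis unfolding tinner_def logm_def by (simp add: dir_const)
qed

lemma tdist_logm:
  fixes x a b :: "'a::complete_space"
  assumes H: "hadamard TYPE('a)"
  shows "tdist x (logm x a) (logm x b) \<le> dist a b"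
proof -
  have "(tdist x (logm x a) (logm x b))\<^sup>2 \<le> (dist a b)\<^sup>2"
    using tdist_sq[OF logm_tangent[OF H] logm_tangent[OF H], of x a b] tinner_logm[OF H, of x a b]
    unfolding logm_def by simp
  then show ?thesis by (rule power2_le_imp_le) simp
qed

lemma tscale_tangent: "u \<in> tangent x \<Longrightarrow> c > 0 \<Longrightarrow> tscale c u \<in> tangent x"
  unfolding tangent_def tscale_def by auto

lemma tinner_tscale: "tinner x (tscale c u) w = c * tinner x u w"
  unfolding tinner_def tscale_def by simp

section \<open>Resolvents\<close>

lemma resolvent_transfer:
  fixes B :: "'a::complete_space \<Rightarrow> 'a tvec set"
  assumes H: "hadamard TYPE('a)" and Bt: "\<And>y. B y \<subseteq> tangent y" and l: "l > 0"
    and R: "is_resolvent_pt B l y z"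
  shows "\<exists>v\<in>B z. \<forall>w\<in>tangent z. tinner z v w = tinner z (logm z y) w / l"
proof -
  obtain v where v: "v \<in> B z" "tdist z (tscale (1 / l) (logm z y)) v = 0"
    using R unfolding is_resolvent_pt_def tmem_def by blast
  have u: "tscale (1 / l) (logm z y) \<in> tangent z" using l by (intro tscale_tangent logm_tangent[OF H]) auto
  have vt: "v \<in> tangent z" using v Bt by auto
  show ?thesis
  proof (intro bexI[OF _ v(1)] ballI)
    fix w assume w: "w \<in> tangent z"
    have "tinner z v w = tinner z (tscale (1 / l) (logm z y)) w"
      using tdist_zero_transfer[OF H u vt w v(2)] by simp
    then show "tinner z v w = tinner z (logm z y) w / l" by (simp add: tinner_tscale)
  qed
qed

lemma resolvent_mono_ineq:
  fixes B :: "'a::complete_space \<Rightarrow> 'a tvec set"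
  assumes H: "hadamard TYPE('a)" and Bt: "\<And>y. B y \<subseteq> tangent y" and l: "l > 0"
    and M: "monotone_vf B"
    and R1: "is_resolvent_pt B l y1 z1" and R2: "is_resolvent_pt B l y2 z2"
  shows "2 * (dist z1 z2)\<^sup>2 \<le> (dist y1 z2)\<^sup>2 + (dist y2 z1)\<^sup>2 - (dist y1 z1)\<^sup>2 - (dist y2 z2)\<^sup>2"
proof -
  obtain v1 where v1: "v1 \<in> B z1" "\<And>w. w\<in>tangent z1 \<Longrightarrow> tinner z1 v1 w = tinner z1 (logm z1 y1) w / l"
    using resolvent_transfer[OF H Bt l R1] by blast
  obtain v2 where v2: "v2 \<in> B z2" "\<And>w. w\<in>tangent z2 \<Longrightarrow> tinner z2 v2 w = tinner z2 (logm z2 y2) w / l"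
    using resolvent_transfer[OF H Bt l R2] by blast
  have "tinner z1 v1 (logm z1 z2) \<le> - tinner z2 v2 (logm z2 z1)"
    using M v1(1) v2(1) unfolding monotone_vf_def by blast
  then have "tinner z1 (logm z1 y1) (logm z1 z2) / l + tinner z2 (logm z2 y2) (logm z2 z1) / l \<le> 0"
    using v1(2)[OF logm_tangent[OF H]] v2(2)[OF logm_tangent[OF H]] by simp
  then have S: "tinner z1 (logm z1 y1) (logm z1 z2) + tinner z2 (logm z2 y2) (logm z2 z1) \<le> 0"
    using l by (simp add: add_divide_distrib[symmetric] divide_le_0_iff)
  have Q1: "2 * tinner z1 (logm z1 y1) (logm z1 z2) \<ge> (dist z1 y1)\<^sup>2 + (dist z1 z2)\<^sup>2 - (dist y1 z2)\<^sup>2"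
    by (rule tinner_logm[OF H])
  have Q2: "2 * tinner z2 (logm z2 y2) (logm z2 z1) \<ge> (dist z2 y2)\<^sup>2 + (dist z2 z1)\<^sup>2 - (dist y2 z1)\<^sup>2"
    by (rule tinner_logm[OF H])
  show ?thesis using S Q1 Q2 by (simp add: dist_commute)
qed

lemma resolvent_unique:
  fixes B :: "'a::complete_space \<Rightarrow> 'a tvec set"
  assumes H: "hadamard TYPE('a)" and Bt: "\<And>y. B y \<subseteq> tangent y" and l: "l > 0"
    and M: "monotone_vf B"
    and R1: "is_resolvent_pt B l y z1" and R2: "is_resolvent_pt B l y z2"
  shows "z1 = z2"
  using resolvent_mono_ineq[OF H Bt l M R1 R2] by simp

lemma resolvent_is:
  fixes B :: "'a::complete_space \<Rightarrow> 'a tvec set"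
  assumes H: "hadamard TYPE('a)" and Bt: "\<And>y. B y \<subseteq> tangent y" and l: "l > 0"
    and M: "monotone_vf B" and S: "surjectivity_cond B"
  shows "is_resolvent_pt B l y (resolvent B l y)"
proof -
  obtain z where z: "is_resolvent_pt B l y z" using S l unfolding surjectivity_cond_def by blast
  show ?thesis unfolding resolvent_def
    by (rule theI[of _ z]) (use z resolvent_unique[OF H Bt l M] in blast)+
qed

lemma resolvent_cont_bound:
  fixes B :: "'a::complete_space \<Rightarrow> 'a tvec set"
  assumes H: "hadamard TYPE('a)" and Bt: "\<And>y. B y \<subseteq> tangent y" and l: "l > 0"
    and M: "monotone_vf B" and S: "surjectivity_cond B"
  shows "(dist (resolvent B l y1) (resolvent B l y2))\<^sup>2
          \<le> 5 * (dist y1 y2)\<^sup>2 + 4 * dist y1 (resolvent B l y1) * dist y1 y2"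
proof -
  define z1 where "z1 = resolvent B l y1"
  define z2 where "z2 = resolvent B l y2"
  define D where "D = dist z1 z2"
  define \<delta> where "\<delta> = dist y1 y2"
  define a where "a = dist y1 z1"
  define b where "b = dist y2 z2"
  have M2: "2 * D\<^sup>2 \<le> (dist y1 z2)\<^sup>2 + (dist y2 z1)\<^sup>2 - a\<^sup>2 - b\<^sup>2"
    unfolding D_def a_def b_def z1_def z2_def
    by (rule resolvent_mono_ineq[OF H Bt l M resolvent_is[OF H Bt l M S] resolvent_is[OF H Bt l M S]])
  have nn: "D \<ge> 0" "\<delta> \<ge> 0" "a \<ge> 0" "b \<ge> 0" unfolding D_def \<delta>_def a_def b_def by auto
  have t1: "dist y1 z2 \<le> \<delta> + b" unfolding \<delta>_def b_def by (rule dist_triangle)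
  have t2: "dist y2 z1 \<le> \<delta> + a" unfolding \<delta>_def a_def using dist_triangle[of y2 z1 y1] by (simp add: dist_commute)
  have t3: "b \<le> \<delta> + a + D" unfolding \<delta>_def a_def b_def D_def
    using dist_triangle[of y2 z2 y1] dist_triangle[of y1 z2 z1] by (simp add: dist_commute)
  have s1: "(dist y1 z2)\<^sup>2 \<le> (\<delta> + b)\<^sup>2" using t1 by (intro power_mono) auto
  have s2: "(dist y2 z1)\<^sup>2 \<le> (\<delta> + a)\<^sup>2" using t2 by (intro power_mono) auto
  have "2 * D\<^sup>2 \<le> 2 * \<delta>\<^sup>2 + 2 * \<delta> * (a + b)"
    using M2 s1 s2 by (simp add: power2_sum algebra_simps)
  also have "\<dots> \<le> 2 * \<delta>\<^sup>2 + 2 * \<delta> * (2 * a + \<delta> + D)"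
    using t3 nn by (intro add_left_mono mult_left_mono) auto
  finally have A0: "2 * D\<^sup>2 \<le> 2 * \<delta>\<^sup>2 + 2 * \<delta> * (2 * a + \<delta> + D)" .
  have "2 * \<delta> * (2 * a + \<delta> + D) = 4 * (\<delta> * a) + 2 * \<delta>\<^sup>2 + 2 * (\<delta> * D)"
    by (simp add: algebra_simps power2_eq_square)
  then have A: "D\<^sup>2 \<le> 2 * \<delta>\<^sup>2 + 2 * (\<delta> * a) + \<delta> * D" using A0 by linarith
  have "2 * (\<delta> * D) \<le> \<delta>\<^sup>2 + D\<^sup>2" using sum_squares_bound[of \<delta> D] by (simp add: power2_eq_square)
  then have "D\<^sup>2 \<le> 5 * \<delta>\<^sup>2 + 4 * (\<delta> * a)" using A by linarith
  then have "D\<^sup>2 \<le> 5 * \<delta>\<^sup>2 + 4 * a * \<delta>" by (simp add: algebra_simps)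
  then show ?thesis unfolding D_def \<delta>_def a_def z1_def z2_def by (simp add: mult.commute mult.left_commute)
qed

lemma resolvent_continuous:
  fixes B :: "'a::complete_space \<Rightarrow> 'a tvec set"
  assumes H: "hadamard TYPE('a)" and Bt: "\<And>y. B y \<subseteq> tangent y" and l: "l > 0"
    and M: "monotone_vf B" and S: "surjectivity_cond B"
  shows "continuous_on UNIV (resolvent B l)"
proof -
  have "isCont (resolvent B l) y1" for y1
  proof (rule continuous_at_eps_delta[THEN iffD2], intro allI impI)
    fix e :: real assume e: "e > 0"
    define a where "a = dist y1 (resolvent B l y1)"
    have a: "a \<ge> 0" unfolding a_def by simp
    define d where "d = min 1 (e\<^sup>2 / (5 + 4 * a + 1))"
    have d: "d > 0" unfolding d_def using e a by simp
    show "\<exists>d>0. \<forall>y. dist y y1 < d \<longrightarrow> dist (resolvent B l y) (resolvent B l y1) < e"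
    proof (intro exI[of _ d] conjI allI impI d)
      fix y assume y: "dist y y1 < d"
      define \<delta> where "\<delta> = dist y1 y"
      have \<delta>: "0 \<le> \<delta>" "\<delta> < 1" "\<delta> < e\<^sup>2 / (5 + 4 * a + 1)"
        using y unfolding \<delta>_def d_def by (auto simp: dist_commute)
      have "(dist (resolvent B l y1) (resolvent B l y))\<^sup>2 \<le> 5 * \<delta>\<^sup>2 + 4 * a * \<delta>"
        using resolvent_cont_bound[OF H Bt l M S, of y1 y] unfolding a_def \<delta>_def by simp
      also have "\<dots> \<le> (5 + 4 * a) * \<delta>"
      proof -
        have "\<delta> * \<delta> \<le> 1 * \<delta>" using \<delta> by (intro mult_right_mono) auto
        then have "\<delta>\<^sup>2 \<le> \<delta>" by (simp add: power2_eq_square)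
        then show ?thesis by (simp add: algebra_simps)
      qed
      also have "\<dots> \<le> (5 + 4 * a + 1) * \<delta>" using \<delta> by (simp add: mult_right_mono)
      also have "\<dots> < e\<^sup>2" using \<delta> a by (simp add: less_divide_eq mult.commute)
      finally have "(dist (resolvent B l y) (resolvent B l y1))\<^sup>2 < e\<^sup>2" by (simp add: dist_commute)
      then show "dist (resolvent B l y) (resolvent B l y1) < e"
        using e by (simp add: power2_less_imp_less)
    qed
  qed
  then show ?thesis by (simp add: continuous_at_imp_continuous_on)
qed

lemma amgm_beta:
  fixes l f d \<beta> :: real
  assumes "\<beta> > 0"
  shows "2 * l * f * d \<le> 2 * \<beta> * d\<^sup>2 + l\<^sup>2 * f\<^sup>2 / (2 * \<beta>)"
proof -
  have "0 \<le> (2 * \<beta> * d - l * f)\<^sup>2 / (2 * \<beta>)" using assms by simp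
  also have "(2 * \<beta> * d - l * f)\<^sup>2 / (2 * \<beta>) = 2 * \<beta> * d\<^sup>2 + l\<^sup>2 * f\<^sup>2 / (2 * \<beta>) - 2 * l * f * d"
    using assms by (simp add: power2_eq_square field_simps)
  finally show ?thesis by simp
qed

lemma pointwise_ineq:
  fixes B :: "'a::complete_space \<Rightarrow> 'a tvec set"
  assumes H: "hadamard TYPE('a)" and Bt: "\<And>y. B y \<subseteq> tangent y" and l: "l > 0"
    and M: "monotone_vf B" and S: "surjectivity_cond B" and SM: "strongly_monotone B \<alpha>" and \<alpha>: "\<alpha> \<ge> 0"
    and \<phi>t: "\<phi> \<in> tangent xs" and \<phi>m: "tmem xs \<phi> (B xs)" and \<beta>: "\<beta> > 0"
  shows "(dist (resolvent B l y) xs)\<^sup>2 + l\<^sup>2 * (1 - 2 * \<beta>) * (tnorm (yosida B l y))\<^sup>2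
     \<le> (dist y xs)\<^sup>2 - 2 * l * tinner xs \<phi> (logm xs y) + l\<^sup>2 * (fst \<phi>)\<^sup>2 / (2 * \<beta>)"
proof -
  define z where "z = resolvent B l y"
  have R: "is_resolvent_pt B l y z" unfolding z_def by (rule resolvent_is[OF H Bt l M S])
  obtain v where v: "v \<in> B z" "\<And>w. w\<in>tangent z \<Longrightarrow> tinner z v w = tinner z (logm z y) w / l"
    using resolvent_transfer[OF H Bt l R] by blast
  obtain w where w: "w \<in> B xs" "tdist xs \<phi> w = 0" using \<phi>m unfolding tmem_def by blast
  have wt: "w \<in> tangent xs" using w Bt by auto
  have "tinner z v (logm z xs) \<le> - tinner xs w (logm xs z) - \<alpha> * (dist z xs)\<^sup>2"
    using SM v(1) w(1) unfolding strongly_monotone_def by blast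
  also have "\<dots> \<le> - tinner xs w (logm xs z)" using \<alpha> by simp
  also have "tinner xs w (logm xs z) = tinner xs \<phi> (logm xs z)"
    using tdist_zero_transfer[OF H \<phi>t wt logm_tangent[OF H] w(2)] by simp
  finally have I: "tinner z (logm z y) (logm z xs) / l \<le> - tinner xs \<phi> (logm xs z)"
    using v(2)[OF logm_tangent[OF H]] by simp
  then have I2: "tinner z (logm z y) (logm z xs) \<le> - l * tinner xs \<phi> (logm xs z)"
    using l by (simp add: divide_le_eq mult.commute)
  have Q: "2 * tinner z (logm z y) (logm z xs) \<ge> (dist z y)\<^sup>2 + (dist z xs)\<^sup>2 - (dist y xs)\<^sup>2"
    by (rule tinner_logm[OF H])
  have Lp: "\<bar>tinner xs \<phi> (logm xs z) - tinner xs \<phi> (logm xs y)\<bar> \<le> fst \<phi> * tdist xs (logm xs z) (logm xs y)"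
    by (rule tinner_lip[OF H \<phi>t logm_tangent[OF H] logm_tangent[OF H]])
  have "fst \<phi> * tdist xs (logm xs z) (logm xs y) \<le> fst \<phi> * dist z y"
    using tangent_fst[OF \<phi>t] tdist_logm[OF H] by (intro mult_left_mono) auto
  then have L2: "- tinner xs \<phi> (logm xs z) \<le> - tinner xs \<phi> (logm xs y) + fst \<phi> * dist z y"
    using Lp by linarith
  have "l * (- tinner xs \<phi> (logm xs z)) \<le> l * (- tinner xs \<phi> (logm xs y) + fst \<phi> * dist z y)"
    using L2 l by (intro mult_left_mono) auto
  then have main: "(dist z y)\<^sup>2 + (dist z xs)\<^sup>2 - (dist y xs)\<^sup>2
      \<le> - 2 * l * tinner xs \<phi> (logm xs y) + 2 * l * fst \<phi> * dist z y"
    using Q I2 by (simp add: algebra_simps)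
  have am: "2 * l * fst \<phi> * dist z y \<le> 2 * \<beta> * (dist z y)\<^sup>2 + l\<^sup>2 * (fst \<phi>)\<^sup>2 / (2 * \<beta>)"
    by (rule amgm_beta[OF \<beta>])
  have yn: "l\<^sup>2 * (tnorm (yosida B l y))\<^sup>2 = (dist z y)\<^sup>2"
    unfolding yosida_def tnorm_def tscale_def logm_def z_def[symmetric] using l
    by (simp add: power2_eq_square)
  have "l\<^sup>2 * (1 - 2 * \<beta>) * (tnorm (yosida B l y))\<^sup>2 = (1 - 2 * \<beta>) * (dist z y)\<^sup>2"
    using yn by (simp add: algebra_simps)
  then show ?thesis unfolding z_def[symmetric] using main am by (simp add: algebra_simps)
qed



lemma carath_meas:
  fixes h :: "'e \<Rightarrow> 'a::polish_space \<Rightarrow> 'b::metric_space"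
  assumes hc: "\<And>s. s \<in> space N \<Longrightarrow> continuous_on UNIV (h s)"
    and hm: "\<And>y. (\<lambda>s. h s y) \<in> borel_measurable N"
    and f: "f \<in> measurable M N" and Y: "Y \<in> borel_measurable M"
  shows "(\<lambda>\<omega>. h (f \<omega>) (Y \<omega>)) \<in> borel_measurable M"
proof -
  obtain D :: "'a set" where D: "countable D" "D \<noteq> {}" "\<And>U. open U \<Longrightarrow> U \<noteq> {} \<Longrightarrow> \<exists>y\<in>D. y \<in> U"
    using countable_dense_exists by blast
  define e where "e = from_nat_into D"
  have ex: "\<exists>j. dist (e j) y < r" if "r > 0" for y :: 'a and r :: real
  proof -
    have "ball y r \<noteq> {}" using that by simp
    then obtain d where "d \<in> D" "d \<in> ball y r" using D(3)[of "ball y r"] by blast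
    then show ?thesis unfolding e_def using from_nat_into_surj[OF D(1)]
      by (metis dist_commute mem_ball)
  qed
  define Nk where "Nk = (\<lambda>k \<omega>. LEAST j. dist (e j) (Y \<omega>) < 1 / Suc k)"
  have Nk_prop: "dist (e (Nk k \<omega>)) (Y \<omega>) < 1 / Suc k" for k \<omega>
    unfolding Nk_def by (rule LeastI_ex) (rule ex, simp)
  have Nk_meas: "Nk k \<in> measurable M (count_space UNIV)" for k
    unfolding Nk_def by measurable (use Y in measurable)
  have gk: "(\<lambda>\<omega>. h (f \<omega>) (e (Nk k \<omega>))) \<in> borel_measurable M" for k
  proof (rule measurable_compose_countable'[where I=UNIV and g="Nk k" and f="\<lambda>i \<omega>. h (f \<omega>) (e i)"])
    fix i :: nat
    show "(\<lambda>\<omega>. h (f \<omega>) (e i)) \<in> borel_measurable M"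
      using measurable_compose[OF f hm[of "e i"]] by simp
  qed (use Nk_meas in auto)
  show ?thesis
  proof (rule borel_measurable_LIMSEQ_metric[OF gk])
    fix \<omega> assume \<omega>: "\<omega> \<in> space M"
    have "(\<lambda>k. e (Nk k \<omega>)) \<longlonglongrightarrow> Y \<omega>"
    proof (rule tendsto_sandwich[THEN tendsto_dist_iff[THEN iffD2]])
      show "\<forall>\<^sub>F k in sequentially. 0 \<le> dist (e (Nk k \<omega>)) (Y \<omega>)" by simp
      show "\<forall>\<^sub>F k in sequentially. dist (e (Nk k \<omega>)) (Y \<omega>) \<le> 1 / Suc k"
        using Nk_prop less_imp_le by (intro always_eventually allI) blast
      show "(\<lambda>k. 0::real) \<longlonglongrightarrow> 0" by simp
      show "(\<lambda>k. 1 / real (Suc k)) \<longlonglongrightarrow> 0" by (rule LIMSEQ_inverse_real_of_nat[unfolded inverse_eq_divide])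
    qed
    moreover have "isCont (h (f \<omega>)) (Y \<omega>)"
      using hc[of "f \<omega>"] f \<omega> by (simp add: continuous_on_eq_continuous_at measurable_space)
    ultimately show "(\<lambda>k. h (f \<omega>) (e (Nk k \<omega>))) \<longlonglongrightarrow> h (f \<omega>) (Y \<omega>)"
      by (rule isCont_tendsto_compose[rotated])
  qed
qed

lemma filtr_gen_Pow: "{\<xi> i -` B \<inter> space P | i B. i \<in> {1..k} \<and> B \<in> sets \<mu>} \<subseteq> Pow (space P)"
  by auto

lemma filtr_space: "space (filtr P \<mu> \<xi> k) = space P"
  unfolding filtr_def by (simp add: space_measure_of_conv)

lemma filtr_sets: "sets (filtr P \<mu> \<xi> k) = sigma_sets (space P) {\<xi> i -` B \<inter> space P | i B. i \<in> {1..k} \<and> B \<in> sets \<mu>}"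
  unfolding filtr_def by (rule sets_measure_of[OF filtr_gen_Pow])

lemma filtr_subalg:
  assumes xi: "\<forall>j. \<xi> (Suc j) \<in> measurable P \<mu>"
  shows "subalgebra P (filtr P \<mu> \<xi> k)"
proof -
  have "{\<xi> i -` B \<inter> space P | i B. i \<in> {1..k} \<and> B \<in> sets \<mu>} \<subseteq> sets P"
  proof
    fix X assume "X \<in> {\<xi> i -` B \<inter> space P | i B. i \<in> {1..k} \<and> B \<in> sets \<mu>}"
    then obtain i B where X: "X = \<xi> i -` B \<inter> space P" "i \<in> {1..k}" "B \<in> sets \<mu>" by blast
    then obtain j where "i = Suc j" by (cases i) auto
    then have "\<xi> i \<in> measurable P \<mu>" using xi by simp
    then show "X \<in> sets P" using X by (simp add: measurable_sets)
  qed
  then have "sets (filtr P \<mu> \<xi> k) \<subseteq> sets P" unfolding filtr_sets by (rule sets.sigma_sets_subset)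
  then show ?thesis unfolding subalgebra_def filtr_space by simp
qed

lemma xi_filtr_meas:
  assumes xi: "\<forall>j. \<xi> (Suc j) \<in> measurable P \<mu>" and i: "1 \<le> i" "i \<le> k"
  shows "\<xi> i \<in> measurable (filtr P \<mu> \<xi> k) \<mu>"
proof (rule measurableI)
  obtain j where "i = Suc j" using i by (cases i) auto
  then have m: "\<xi> i \<in> measurable P \<mu>" using xi by simp
  fix \<omega> assume "\<omega> \<in> space (filtr P \<mu> \<xi> k)"
  then show "\<xi> i \<omega> \<in> space \<mu>" using m unfolding filtr_space by (simp add: measurable_space)
next
  fix B assume "B \<in> sets \<mu>"
  then show "\<xi> i -` B \<inter> space (filtr P \<mu> \<xi> k) \<in> sets (filtr P \<mu> \<xi> k)"
    unfolding filtr_sets filtr_space using i by (intro sigma_sets.Basic) auto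
qed

lemma iter_meas:
  fixes A :: "'e \<Rightarrow> 'a::polish_space \<Rightarrow> 'a tvec set"
  assumes H: "hadamard TYPE('a)"
    and A_tangent: "\<forall>s\<in>space \<mu>. \<forall>x. A s x \<subseteq> tangent x"
    and A_mono: "\<forall>s\<in>space \<mu>. monotone_vf (A s)"
    and A_meas: "\<forall>x. \<forall>l>0. (\<lambda>s. resolvent (A s) l x) \<in> measurable \<mu> borel"
    and A_surj: "\<forall>s\<in>space \<mu>. surjectivity_cond (A s)"
    and lam_pos: "\<forall>k. lam k > 0"
    and xi: "\<forall>j. \<xi> (Suc j) \<in> measurable P \<mu>"
  shows "j \<le> k \<Longrightarrow> spp_iter A x0 lam \<xi> j \<in> borel_measurable (filtr P \<mu> \<xi> k)"
proof (induction j)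
  case 0 then show ?case by simp
next
  case (Suc j)
  have "(\<lambda>\<omega>. resolvent (A (\<xi> (Suc j) \<omega>)) (lam j) (spp_iter A x0 lam \<xi> j \<omega>)) \<in> borel_measurable (filtr P \<mu> \<xi> k)"
  proof (rule carath_meas[where h="\<lambda>s y. resolvent (A s) (lam j) y" and N=\<mu>])
    fix s assume s: "s \<in> space \<mu>"
    show "continuous_on UNIV (resolvent (A s) (lam j))"
      using s A_tangent A_mono A_surj lam_pos by (intro resolvent_continuous[OF H]) auto
  next
    fix y show "(\<lambda>s. resolvent (A s) (lam j) y) \<in> borel_measurable \<mu>" using A_meas lam_pos by auto
  next
    show "\<xi> (Suc j) \<in> measurable (filtr P \<mu> \<xi> k) \<mu>" using Suc.prems by (intro xi_filtr_meas[OF xi]) auto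
  next
    show "spp_iter A x0 lam \<xi> j \<in> borel_measurable (filtr P \<mu> \<xi> k)" using Suc by simp
  qed
  then show ?case by simp
qed

lemma tdist_tzero:
  fixes x :: "'a::complete_space"
  assumes u: "u \<in> tangent x"
  shows "tdist x (tzero x) u = fst u"
proof -
  have "tinner x (tzero x) u = 0" unfolding tinner_def tzero_def by simp
  then have "(tdist x (tzero x) u)\<^sup>2 = (fst u)\<^sup>2" using tdist_sq[OF tzero_tangent u] unfolding tzero_def by simp
  then show ?thesis by (rule power2_eq_imp_eq[OF _ tdist_sq(2)[OF tzero_tangent u] tangent_fst[OF u]])
qed

lemma inner_phi_meas:
  fixes \<phi> :: "'e \<Rightarrow> 'a::complete_space tvec"
  assumes H: "hadamard TYPE('a)" and tm: "tmeasurable \<mu> xs \<phi>"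
  shows "(\<lambda>s. tinner xs (\<phi> s) (logm xs y)) \<in> borel_measurable \<mu>"
    and "(\<lambda>s. fst (\<phi> s)) \<in> borel_measurable \<mu>"
proof -
  have pt: "\<And>s. s \<in> space \<mu> \<Longrightarrow> \<phi> s \<in> tangent xs" using tm unfolding tmeasurable_def by auto
  have m1: "(\<lambda>s. tdist xs (tzero xs) (\<phi> s)) \<in> borel_measurable \<mu>"
    using tm tzero_tangent unfolding tmeasurable_def by blast
  have m2: "(\<lambda>s. tdist xs (logm xs y) (\<phi> s)) \<in> borel_measurable \<mu>"
    using tm logm_tangent[OF H] unfolding tmeasurable_def by blast
  show "(\<lambda>s. fst (\<phi> s)) \<in> borel_measurable \<mu>"
    using m1 by (subst measurable_cong[where g="\<lambda>s. tdist xs (tzero xs) (\<phi> s)"]) (auto simp: tdist_tzero pt)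
  have eq: "tinner xs (\<phi> s) (logm xs y) = ((dist xs y)\<^sup>2 + (tdist xs (tzero xs) (\<phi> s))\<^sup>2 - (tdist xs (logm xs y) (\<phi> s))\<^sup>2) / 2"
    if s: "s \<in> space \<mu>" for s
  proof -
    have "(tdist xs (logm xs y) (\<phi> s))\<^sup>2 = (dist xs y)\<^sup>2 + (fst (\<phi> s))\<^sup>2 - 2 * tinner xs (logm xs y) (\<phi> s)"
      using tdist_sq(1)[OF logm_tangent[OF H] pt[OF s]] unfolding logm_def by simp
    moreover have "tinner xs (logm xs y) (\<phi> s) = tinner xs (\<phi> s) (logm xs y)"
      by (rule tinner_commute[OF H logm_tangent[OF H] pt[OF s]])
    ultimately show ?thesis using tdist_tzero[OF pt[OF s]] by simp
  qed
  note [measurable] = m1 m2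
  show "(\<lambda>s. tinner xs (\<phi> s) (logm xs y)) \<in> borel_measurable \<mu>"
    by (subst measurable_cong[OF eq]) (assumption, measurable)
qed

lemma inner_phi_cont:
  fixes xs :: "'a::complete_space"
  assumes H: "hadamard TYPE('a)" and u: "u \<in> tangent xs"
  shows "continuous_on UNIV (\<lambda>y. tinner xs u (logm xs y))"
proof (rule lipschitz_on_continuous_on[where L="fst u"], rule lipschitz_onI)
  fix y y' :: 'a
  have "\<bar>tinner xs u (logm xs y) - tinner xs u (logm xs y')\<bar> \<le> fst u * tdist xs (logm xs y) (logm xs y')"
    by (rule tinner_lip[OF H u logm_tangent[OF H] logm_tangent[OF H]])
  also have "\<dots> \<le> fst u * dist y y'"
    using tangent_fst[OF u] tdist_logm[OF H] by (intro mult_left_mono) auto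
  finally show "dist (tinner xs u (logm xs y)) (tinner xs u (logm xs y')) \<le> fst u * dist y y'"
    by (simp add: dist_real_def)
qed (use tangent_fst[OF u] in auto)

lemma indep_filtr:
  fixes P :: "'w measure" and \<mu> :: "'e measure"
  assumes probO: "prob_space P" and xi: "\<forall>k. \<xi> (Suc k) \<in> measurable P \<mu>"
    and ind: "prob_space.indep_vars P (\<lambda>_. \<mu>) (\<lambda>k. \<xi> (Suc k)) UNIV"
    and A: "A \<in> sets (filtr P \<mu> \<xi> n)" and B: "B \<in> sets \<mu>"
  shows "emeasure P (A \<inter> (\<xi> (Suc n) -` B \<inter> space P)) = emeasure P A * emeasure P (\<xi> (Suc n) -` B \<inter> space P)"
proof -
  interpret prob_space P by (rule probO)
  define E where "E = (\<lambda>i. {\<xi> (Suc i) -` B \<inter> space P | B. B \<in> sets \<mu>})"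
  have indE: "indep_sets E UNIV" using ind unfolding indep_vars_def2 E_def by simp
  define I where "I = (\<lambda>b::bool. if b then {..<n} else {n})"
  have indE': "indep_sets E (\<Union>j\<in>UNIV. I j)" by (rule indep_sets_mono_index[OF _ indE]) auto
  have IS: "Int_stable (E i)" for i
  proof (rule Int_stableI)
    fix a b assume "a \<in> E i" "b \<in> E i"
    then obtain Ba Bb where "a = \<xi> (Suc i) -` Ba \<inter> space P" "Ba \<in> sets \<mu>"
      "b = \<xi> (Suc i) -` Bb \<inter> space P" "Bb \<in> sets \<mu>" unfolding E_def by blast
    then show "a \<inter> b \<in> E i" unfolding E_def by (intro CollectI exI[of _ "Ba \<inter> Bb"]) auto
  qed
  have disj: "disjoint_family_on I UNIV" unfolding disjoint_family_on_def I_def by auto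
  have ind2: "indep_sets (\<lambda>j. sigma_sets (space P) (\<Union>i\<in>I j. E i)) UNIV"
    by (rule indep_sets_collect_sigma[OF indE' IS disj])
  have gen: "{\<xi> i -` B \<inter> space P | i B. i \<in> {1..n} \<and> B \<in> sets \<mu>} = (\<Union>i\<in>I True. E i)"
  proof (intro equalityI subsetI)
    fix X assume "X \<in> {\<xi> i -` B \<inter> space P | i B. i \<in> {1..n} \<and> B \<in> sets \<mu>}"
    then obtain i B where X: "X = \<xi> i -` B \<inter> space P" "i \<in> {1..n}" "B \<in> sets \<mu>" by blast
    then obtain j where j: "i = Suc j" by (cases i) auto
    have "X \<in> E j" unfolding E_def using X j by blast
    moreover have "j \<in> I True" unfolding I_def using X j by auto
    ultimately show "X \<in> (\<Union>i\<in>I True. E i)" by blast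
  next
    fix X assume "X \<in> (\<Union>i\<in>I True. E i)"
    then obtain j B where "X = \<xi> (Suc j) -` B \<inter> space P" "j < n" "B \<in> sets \<mu>" unfolding I_def E_def by auto
    then show "X \<in> {\<xi> i -` B \<inter> space P | i B. i \<in> {1..n} \<and> B \<in> sets \<mu>}"
      by (intro CollectI exI[of _ "Suc j"] exI[of _ B]) auto
  qed
  define C where "C = (\<lambda>b::bool. if b then A else \<xi> (Suc n) -` B \<inter> space P)"
  have CT: "C True \<in> sigma_sets (space P) (\<Union>i\<in>I True. E i)"
    using A unfolding C_def filtr_sets gen by simp
  have CF: "C False \<in> sigma_sets (space P) (\<Union>i\<in>I False. E i)"
    unfolding C_def I_def E_def using B by (intro sigma_sets.Basic) auto
  have "prob (\<Inter>j\<in>UNIV. C j) = (\<Prod>j\<in>UNIV. prob (C j))"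
  proof (rule indep_setsD[OF ind2])
    show "\<forall>j\<in>UNIV. C j \<in> sigma_sets (space P) (\<Union>i\<in>I j. E i)"
    proof
      fix j :: bool show "C j \<in> sigma_sets (space P) (\<Union>i\<in>I j. E i)" using CT CF by (cases j) auto
    qed
  qed auto
  moreover have "(\<Inter>j\<in>UNIV. C j) = A \<inter> (\<xi> (Suc n) -` B \<inter> space P)"
    unfolding C_def UNIV_bool by auto
  moreover have "(\<Prod>j\<in>UNIV. prob (C j)) = prob A * prob (\<xi> (Suc n) -` B \<inter> space P)"
    unfolding C_def by (simp add: UNIV_bool)
  ultimately show ?thesis by (simp add: emeasure_eq_measure ennreal_mult)
qed

lemma indep_integral:
  fixes P :: "'w measure" and \<mu> :: "'e measure" and g :: "'e \<Rightarrow> ennreal"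
  assumes probO: "prob_space P" and xi: "\<forall>k. \<xi> (Suc k) \<in> measurable P \<mu>"
    and ind: "prob_space.indep_vars P (\<lambda>_. \<mu>) (\<lambda>k. \<xi> (Suc k)) UNIV"
    and dis: "distr P \<mu> (\<xi> (Suc n)) = \<mu>"
    and g: "g \<in> borel_measurable \<mu>"
    and A: "A \<in> sets (filtr P \<mu> \<xi> n)"
  shows "(\<integral>\<^sup>+\<omega>. g (\<xi> (Suc n) \<omega>) * indicator A \<omega> \<partial>P) = emeasure P A * (\<integral>\<^sup>+s. g s \<partial>\<mu>)"
proof -
  have AP: "A \<in> sets P" using A filtr_subalg[OF xi] unfolding subalgebra_def by blast
  have xm: "\<xi> (Suc n) \<in> measurable P \<mu>" using xi by simp
  have indm: "indicator A \<in> borel_measurable P" by (rule borel_measurable_indicator[OF AP])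
  have meq: "measurable (density P (indicator A)) \<mu> = measurable P \<mu>"
    by (rule measurable_cong_sets) simp_all
  have xm': "\<xi> (Suc n) \<in> measurable (density P (indicator A)) \<mu>" using xm meq by simp
  define Q where "Q = distr (density P (indicator A)) \<mu> (\<xi> (Suc n))"
  have Qeq: "Q = density \<mu> (\<lambda>_. emeasure P A)"
  proof (rule measure_eqI)
    show "sets Q = sets (density \<mu> (\<lambda>_. emeasure P A))" unfolding Q_def by simp
  next
    fix B assume "B \<in> sets Q"
    then have B: "B \<in> sets \<mu>" unfolding Q_def by simp
    have pre: "\<xi> (Suc n) -` B \<inter> space P \<in> sets P" by (rule measurable_sets[OF xm B])
    have "emeasure Q B = emeasure (density P (indicator A)) (\<xi> (Suc n) -` B \<inter> space (density P (indicator A)))"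
      unfolding Q_def by (rule emeasure_distr[OF xm' B])
    also have "\<dots> = emeasure (density P (indicator A)) (\<xi> (Suc n) -` B \<inter> space P)" by simp
    also have "\<dots> = (\<integral>\<^sup>+ x. indicator A x * indicator (\<xi> (Suc n) -` B \<inter> space P) x \<partial>P)"
      by (rule emeasure_density[OF indm pre])
    also have "\<dots> = (\<integral>\<^sup>+ x. indicator (A \<inter> (\<xi> (Suc n) -` B \<inter> space P)) x \<partial>P)"
      by (intro nn_integral_cong) (simp add: indicator_inter_arith)
    also have "\<dots> = emeasure P (A \<inter> (\<xi> (Suc n) -` B \<inter> space P))"
      by (rule nn_integral_indicator) (use AP pre in blast)
    also have "\<dots> = emeasure P A * emeasure P (\<xi> (Suc n) -` B \<inter> space P)"
      by (rule indep_filtr[OF probO xi ind A B])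
    also have "emeasure P (\<xi> (Suc n) -` B \<inter> space P) = emeasure \<mu> B"
      using emeasure_distr[OF xm B] dis by simp
    also have "emeasure P A * emeasure \<mu> B = (\<integral>\<^sup>+ x. emeasure P A * indicator B x \<partial>\<mu>)"
      by (rule nn_integral_cmult_indicator[symmetric, OF B])
    also have "\<dots> = emeasure (density \<mu> (\<lambda>_. emeasure P A)) B"
      by (rule emeasure_density[symmetric]) (simp_all add: B)
    finally show "emeasure Q B = emeasure (density \<mu> (\<lambda>_. emeasure P A)) B" .
  qed
  have gx: "(\<lambda>\<omega>. g (\<xi> (Suc n) \<omega>)) \<in> borel_measurable P" by (rule measurable_compose[OF xm g])
  have "(\<integral>\<^sup>+\<omega>. g (\<xi> (Suc n) \<omega>) * indicator A \<omega> \<partial>P) = (\<integral>\<^sup>+\<omega>. indicator A \<omega> * g (\<xi> (Suc n) \<omega>) \<partial>P)"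
    by (simp add: mult.commute)
  also have "\<dots> = (\<integral>\<^sup>+\<omega>. g (\<xi> (Suc n) \<omega>) \<partial>density P (indicator A))"
    by (rule nn_integral_density[symmetric, OF indm gx])
  also have "\<dots> = (\<integral>\<^sup>+s. g s \<partial>Q)"
    unfolding Q_def by (rule nn_integral_distr[symmetric, OF xm']) (simp add: g)
  also have "\<dots> = (\<integral>\<^sup>+s. emeasure P A * g s \<partial>\<mu>)"
    unfolding Qeq by (rule nn_integral_density) (simp_all add: g)
  also have "\<dots> = emeasure P A * (\<integral>\<^sup>+s. g s \<partial>\<mu>)"
    by (rule nn_integral_cmult[OF g])
  finally show ?thesis .
qed

lemma indep_cond_exp:
  fixes P :: "'w measure" and \<mu> :: "'e measure" and g :: "'e \<Rightarrow> ennreal"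
  assumes probO: "prob_space P" and xi: "\<forall>k. \<xi> (Suc k) \<in> measurable P \<mu>"
    and ind: "prob_space.indep_vars P (\<lambda>_. \<mu>) (\<lambda>k. \<xi> (Suc k)) UNIV"
    and dis: "distr P \<mu> (\<xi> (Suc n)) = \<mu>"
    and g: "g \<in> borel_measurable \<mu>"
  shows "AE \<omega> in P. nn_cond_exp P (filtr P \<mu> \<xi> n) (\<lambda>\<omega>. g (\<xi> (Suc n) \<omega>)) \<omega> = (\<integral>\<^sup>+s. g s \<partial>\<mu>)"
proof -
  interpret prob_space P by (rule probO)
  interpret finite_measure_subalgebra P "filtr P \<mu> \<xi> n"
    by unfold_locales (rule filtr_subalg[OF xi])
  have xm: "\<xi> (Suc n) \<in> measurable P \<mu>" using xi by simp
  have "AE \<omega> in P. (\<lambda>_. (\<integral>\<^sup>+s. g s \<partial>\<mu>)) \<omega> = nn_cond_exp P (filtr P \<mu> \<xi> n) (\<lambda>\<omega>. g (\<xi> (Suc n) \<omega>)) \<omega>"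
  proof (rule nn_cond_exp_charact)
    fix A assume A: "A \<in> sets (filtr P \<mu> \<xi> n)"
    have AP: "A \<in> sets P" using A subalg unfolding subalgebra_def by auto
    show "(\<integral>\<^sup>+ x \<in> A. g (\<xi> (Suc n) x) \<partial>P) = (\<integral>\<^sup>+ x \<in> A. (\<integral>\<^sup>+s. g s \<partial>\<mu>) \<partial>P)"
    proof -
      have e1: "(\<integral>\<^sup>+ x \<in> A. g (\<xi> (Suc n) x) \<partial>P) = emeasure P A * (\<integral>\<^sup>+s. g s \<partial>\<mu>)"
        using indep_integral[OF probO xi ind dis g A] by simp
      have e2: "(\<integral>\<^sup>+ x. (\<integral>\<^sup>+s. g s \<partial>\<mu>) * indicator A x \<partial>P) = (\<integral>\<^sup>+s. g s \<partial>\<mu>) * emeasure P A"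
        by (rule nn_integral_cmult_indicator[OF AP])
      show ?thesis unfolding e1 using e2 by (simp add: mult.commute)
    qed
  next
    show "(\<lambda>\<omega>. g (\<xi> (Suc n) \<omega>)) \<in> borel_measurable P" using measurable_compose[OF xm g] by simp
  qed simp
  then show ?thesis by auto
qed



lemma ennreal_sum3:
  fixes a b c :: real
  assumes "0 \<le> a" "0 \<le> b" "0 \<le> c"
  shows "ennreal (a + b + c) = ennreal a + ennreal b + ennreal c"
proof -
  have "ennreal (a + b + c) = ennreal (a + b) + ennreal c" using assms by (intro ennreal_plus) auto
  also have "ennreal (a + b) = ennreal a + ennreal b" using assms by (intro ennreal_plus) auto
  finally show ?thesis .
qed

lemma ennreal_split:
  fixes a1 a2 k L r0 cc f g :: real
  assumes a1: "a1 \<ge> 0" and a2: "a2 \<ge> 0" and k: "k \<ge> 0" and L: "L > 0" and r0: "r0 \<ge> 0"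
    and cc: "cc \<ge> 0" and f: "f \<ge> 0"
    and ineq: "a1 + k * a2 \<le> r0 - L * g + cc * f"
  shows "ennreal a1 + ennreal k * ennreal a2 + ennreal L * ennreal g
         \<le> ennreal r0 + ennreal L * ennreal (- g) + ennreal cc * ennreal f"
proof -
  have m1: "ennreal k * ennreal a2 = ennreal (k * a2)" using k by (rule ennreal_mult'[symmetric])
  have m2: "ennreal L * ennreal g = ennreal (L * g)" using L by (intro ennreal_mult'[symmetric]) simp
  have m3: "ennreal L * ennreal (- g) = ennreal (L * (- g))" using L by (intro ennreal_mult'[symmetric]) simp
  have m4: "ennreal cc * ennreal f = ennreal (cc * f)" using cc by (rule ennreal_mult'[symmetric])
  have ka: "k * a2 \<ge> 0" using k a2 by simp
  have cf: "cc * f \<ge> 0" using cc f by simp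
  show ?thesis
  proof (cases "g \<ge> 0")
    case True
    have Lg: "L * g \<ge> 0" using L True by simp
    have z: "ennreal (L * (- g)) = 0" using L True by (simp add: ennreal_eq_0_iff mult_nonneg_nonpos)
    have "ennreal a1 + ennreal k * ennreal a2 + ennreal L * ennreal g = ennreal (a1 + k * a2 + L * g)"
      unfolding m1 m2 using ennreal_sum3[OF a1 ka Lg] by simp
    also have "\<dots> \<le> ennreal (r0 + 0 + cc * f)" using ineq by (intro ennreal_leI) simp
    also have "\<dots> = ennreal r0 + ennreal L * ennreal (- g) + ennreal cc * ennreal f"
      unfolding m3 m4 z using ennreal_sum3[OF r0 order_refl cf] by simp
    finally show ?thesis .
  next
    case False
    have Lg0: "L * g \<le> 0" using mult_pos_neg[of L g] L False by simp
    then have Lg: "L * (- g) \<ge> 0" by simp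
    have z: "ennreal (L * g) = 0" using Lg0 by (rule ennreal_neg)
    have "ennreal a1 + ennreal k * ennreal a2 + ennreal L * ennreal g = ennreal (a1 + k * a2 + 0)"
      unfolding m1 m2 z using ennreal_sum3[OF a1 ka order_refl] by simp
    also have "\<dots> \<le> ennreal (r0 + L * (- g) + cc * f)" using ineq by (intro ennreal_leI) simp
    also have "\<dots> = ennreal r0 + ennreal L * ennreal (- g) + ennreal cc * ennreal f"
      unfolding m3 m4 using ennreal_sum3[OF r0 Lg cf] by simp
    finally show ?thesis .
  qed
qed

lemma cancel_final:
  fixes e1 e2 k L p m r cc q :: ennreal
  assumes "e1 + k * e2 + L * p \<le> r + L * m + cc * q" "p = m" "m < top" "L < top"
  shows "e1 + k * e2 \<le> r + cc * q"
proof -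
  have "m \<noteq> top" "L \<noteq> top" using assms(3,4) by auto
  then have Lm: "L * m \<noteq> top" by (simp add: ennreal_mult_eq_top_iff)
  have "L * m + (e1 + k * e2) \<le> L * m + (r + cc * q)" using assms(1,2) by (simp add: algebra_simps)
  then show ?thesis using Lm by (simp add: ennreal_add_left_cancel_le)
qed

theorem mainTheorem5:
  fixes \<mu> :: "'e measure" and P :: "'w measure"
    and A :: "'e \<Rightarrow> 'a::polish_space \<Rightarrow> 'a tvec set"
    and x0 xs :: 'a and lam :: "nat \<Rightarrow> real" and \<xi> :: "nat \<Rightarrow> 'w \<Rightarrow> 'e"
    and \<alpha> :: "'e \<Rightarrow> real" and \<phi>s :: "'e \<Rightarrow> 'a tvec" and \<beta> :: real and n :: nat
  assumes hadamard: "hadamard TYPE('a)"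
    and tsep: "\<forall>x::'a. tangent_separable x"
    and probE: "prob_space \<mu>" and probO: "prob_space P"
    and A_tangent: "\<forall>s\<in>space \<mu>. \<forall>x. A s x \<subseteq> tangent x"
    and A_mono: "\<forall>s\<in>space \<mu>. monotone_vf (A s)"
    and A_meas: "\<forall>x. \<forall>l>0. (\<lambda>s. resolvent (A s) l x) \<in> measurable \<mu> borel"
    and A_surj: "\<forall>s\<in>space \<mu>. surjectivity_cond (A s)"
    \<comment> \<open>(A0)\<close>
    and lam_pos: "\<forall>k. lam k > 0"
    and lam_sq: "summable (\<lambda>k. (lam k)\<^sup>2)"
    and lam_div: "\<not> summable lam"
    and xi_meas: "\<forall>k. \<xi> (Suc k) \<in> measurable P \<mu>"
    and xi_indep: "prob_space.indep_vars P (\<lambda>_. \<mu>) (\<lambda>k. \<xi> (Suc k)) UNIV"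
    and xi_distr: "\<forall>k. distr P \<mu> (\<xi> (Suc k)) = \<mu>"
    \<comment> \<open>(A1)\<close>
    and alpha_meas: "\<alpha> \<in> borel_measurable \<mu>"
    and alpha_range: "\<forall>s\<in>space \<mu>. 0 < \<alpha> s \<and> \<alpha> s \<le> 1"
    and alpha_int: "(\<integral>s. \<alpha> s \<partial>\<mu>) > 0"
    and A_smono: "\<forall>s\<in>space \<mu>. strongly_monotone (A s) (\<alpha> s)"
    \<comment> \<open>(A2)\<close>
    and xs_zero: "mean_field_zero \<mu> A xs"
    and phis_sel: "\<phi>s \<in> selections 2 \<mu> A xs"
    and phis_int: "tbarycenter \<mu> xs \<phi>s (tzero xs)"
    \<comment> \<open>(A3)\<close>
    and A3: "\<forall>k. AE \<omega> in P. real_cond_exp P (filtr P \<mu> \<xi> k)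
              (\<lambda>\<omega>. tinner xs (\<phi>s (\<xi> (Suc k) \<omega>)) (logm xs (spp_iter A x0 lam \<xi> k \<omega>))) \<omega> = 0"
    and beta: "0 < \<beta>" "\<beta> \<le> 1/2"
  shows "AE \<omega> in P.
     nn_cond_exp P (filtr P \<mu> \<xi> n)
        (\<lambda>\<omega>. ennreal ((dist (spp_iter A x0 lam \<xi> (Suc n) \<omega>) xs)\<^sup>2)) \<omega>
     + ennreal ((lam n)\<^sup>2 * (1 - 2 * \<beta>)) *
       nn_cond_exp P (filtr P \<mu> \<xi> n)
        (\<lambda>\<omega>. ennreal ((tnorm (yosida (A (\<xi> (Suc n) \<omega>)) (lam n) (spp_iter A x0 lam \<xi> n \<omega>)))\<^sup>2)) \<omega>
     \<le> ennreal ((dist (spp_iter A x0 lam \<xi> n \<omega>) xs)\<^sup>2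
               + (lam n)\<^sup>2 * (\<integral>s. (tnorm (\<phi>s s))\<^sup>2 \<partial>\<mu>) / (2 * \<beta>))"
proof -
  interpret P: prob_space P by (rule probO)
  define F where "F = filtr P \<mu> \<xi> n"
  have subF: "subalgebra P F" unfolding F_def by (rule filtr_subalg[OF xi_meas])
  interpret S: finite_measure_subalgebra P F by unfold_locales (rule subF)
  define x where "x = spp_iter A x0 lam \<xi> n"
  define x1 where "x1 = spp_iter A x0 lam \<xi> (Suc n)"
  define l where "l = lam n"
  define sn where "sn = \<xi> (Suc n)"
  have l: "l > 0" unfolding l_def using lam_pos by simp
  have snm: "sn \<in> measurable P \<mu>" unfolding sn_def using xi_meas by simp
  have xF: "x \<in> borel_measurable F" unfolding x_def F_def
    by (rule iter_meas[OF hadamard A_tangent A_mono A_meas A_surj lam_pos xi_meas]) simp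
  have xP: "x \<in> borel_measurable P" by (rule measurable_from_subalg[OF subF xF])
  have x1P: "x1 \<in> borel_measurable P" unfolding x1_def
    by (rule measurable_from_subalg[OF filtr_subalg[OF xi_meas, where k="Suc n"]])
       (rule iter_meas[OF hadamard A_tangent A_mono A_meas A_surj lam_pos xi_meas], simp)
  have x1eq: "\<And>\<omega>. x1 \<omega> = resolvent (A (sn \<omega>)) l (x \<omega>)" unfolding x1_def x_def sn_def l_def by simp
  have tm: "tmeasurable \<mu> xs \<phi>s" using phis_sel unfolding selections_def by simp
  have phit: "\<And>s. s \<in> space \<mu> \<Longrightarrow> \<phi>s s \<in> tangent xs" using tm unfolding tmeasurable_def by simp
  have phim: "\<And>s. s \<in> space \<mu> \<Longrightarrow> tmem xs (\<phi>s s) (A s xs)" using phis_sel unfolding selections_def by simp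
  have phint: "integrable \<mu> (\<lambda>s. (fst (\<phi>s s))\<^sup>2)" using phis_sel unfolding selections_def tnorm_def by simp
  define c where "c = (\<integral>s. (tnorm (\<phi>s s))\<^sup>2 \<partial>\<mu>)"
  have c_eq: "c = (\<integral>s. (fst (\<phi>s s))\<^sup>2 \<partial>\<mu>)" unfolding c_def tnorm_def ..
  have c0: "c \<ge> 0" unfolding c_eq by simp
  define Gr where "Gr = (\<lambda>\<omega>. tinner xs (\<phi>s (sn \<omega>)) (logm xs (x \<omega>)))"
  define fr where "fr = (\<lambda>\<omega>. fst (\<phi>s (sn \<omega>)))"
  have frm: "(\<lambda>s. fst (\<phi>s s)) \<in> borel_measurable \<mu>" by (rule inner_phi_meas(2)[OF hadamard tm])
  have frP: "fr \<in> borel_measurable P" unfolding fr_def using measurable_compose[OF snm frm] by simp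
  have GP: "Gr \<in> borel_measurable P" unfolding Gr_def
  proof (rule carath_meas[where h="\<lambda>s y. tinner xs (\<phi>s s) (logm xs y)" and N=\<mu>])
    fix s assume "s \<in> space \<mu>"
    then show "continuous_on UNIV (\<lambda>y. tinner xs (\<phi>s s) (logm xs y))"
      by (intro inner_phi_cont[OF hadamard] phit)
  qed (use inner_phi_meas(1)[OF hadamard tm] snm xP in auto)
  note [measurable] = xP x1P GP frP
  define k where "k = l\<^sup>2 * (1 - 2 * \<beta>)"
  define cc where "cc = l\<^sup>2 / (2 * \<beta>)"
  have k0: "k \<ge> 0" unfolding k_def using beta by simp
  have cc0: "cc \<ge> 0" unfolding cc_def using beta by simp
  define a1 where "a1 = (\<lambda>\<omega>. (dist (x1 \<omega>) xs)\<^sup>2)"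
  define a2 where "a2 = (\<lambda>\<omega>. (tnorm (yosida (A (sn \<omega>)) l (x \<omega>)))\<^sup>2)"
  define r0 where "r0 = (\<lambda>\<omega>. (dist (x \<omega>) xs)\<^sup>2)"
  have a2eq: "a2 = (\<lambda>\<omega>. (1 / l * dist (x1 \<omega>) (x \<omega>))\<^sup>2)"
    unfolding a2_def x1eq yosida_def tnorm_def tscale_def logm_def by simp
  have a1m[measurable]: "a1 \<in> borel_measurable P" unfolding a1_def by measurable
  have a2m[measurable]: "a2 \<in> borel_measurable P" unfolding a2eq by measurable
  have r0m[measurable]: "r0 \<in> borel_measurable P" unfolding r0_def by measurable
  have r0F[measurable]: "r0 \<in> borel_measurable F" unfolding r0_def using xF by measurable
  have pw: "a1 \<omega> + k * a2 \<omega> \<le> r0 \<omega> - (2 * l) * Gr \<omega> + cc * (fr \<omega>)\<^sup>2" if \<omega>: "\<omega> \<in> space P" for \<omega>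
  proof -
    have s: "sn \<omega> \<in> space \<mu>" using measurable_space[OF snm \<omega>] .
    have Bt: "\<And>y. A (sn \<omega>) y \<subseteq> tangent y" using A_tangent s by blast
    have M: "monotone_vf (A (sn \<omega>))" using A_mono s by blast
    have S: "surjectivity_cond (A (sn \<omega>))" using A_surj s by blast
    have SM: "strongly_monotone (A (sn \<omega>)) (\<alpha> (sn \<omega>))" using A_smono s by blast
    have al: "\<alpha> (sn \<omega>) \<ge> 0" using alpha_range s by (simp add: less_imp_le)
    have "(dist (resolvent (A (sn \<omega>)) l (x \<omega>)) xs)\<^sup>2 + l\<^sup>2 * (1 - 2 * \<beta>) * (tnorm (yosida (A (sn \<omega>)) l (x \<omega>)))\<^sup>2
     \<le> (dist (x \<omega>) xs)\<^sup>2 - 2 * l * tinner xs (\<phi>s (sn \<omega>)) (logm xs (x \<omega>)) + l\<^sup>2 * (fst (\<phi>s (sn \<omega>)))\<^sup>2 / (2 * \<beta>)"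
      by (rule pointwise_ineq[OF hadamard Bt l M S SM al phit[OF s] phim[OF s] beta(1)])
    then show ?thesis unfolding a1_def a2_def r0_def Gr_def fr_def x1eq k_def cc_def
      by (simp add: algebra_simps)
  qed
  define E where "E = nn_cond_exp P F"
  have a1nn: "\<And>\<omega>. a1 \<omega> \<ge> 0" and a2nn: "\<And>\<omega>. a2 \<omega> \<ge> 0" and r0nn: "\<And>\<omega>. r0 \<omega> \<ge> 0"
    unfolding a1_def a2_def r0_def by auto
  define LF where "LF = (\<lambda>\<omega>. ennreal (a1 \<omega>) + ennreal k * ennreal (a2 \<omega>) + ennreal (2 * l) * ennreal (Gr \<omega>))"
  define RF where "RF = (\<lambda>\<omega>. ennreal (r0 \<omega>) + ennreal (2 * l) * ennreal (- Gr \<omega>) + ennreal cc * ennreal ((fr \<omega>)\<^sup>2))"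
  have LFm[measurable]: "LF \<in> borel_measurable P" unfolding LF_def by measurable
  have RFm[measurable]: "RF \<in> borel_measurable P" unfolding RF_def by measurable
  have h1: "AE \<omega> in P. E LF \<omega> \<le> E RF \<omega>" unfolding E_def
  proof (rule S.nn_cond_exp_mono[OF AE_I2 LFm RFm])
    fix \<omega> assume \<omega>: "\<omega> \<in> space P"
    show "LF \<omega> \<le> RF \<omega>" unfolding LF_def RF_def
      by (rule ennreal_split[OF a1nn a2nn k0 _ r0nn cc0 _ pw[OF \<omega>]]) (use l in auto)
  qed
  have ck: "(\<lambda>_. ennreal k) \<in> borel_measurable F" "(\<lambda>_. ennreal (2 * l)) \<in> borel_measurable F"
    "(\<lambda>_. ennreal cc) \<in> borel_measurable F" by simp_all
  have s1: "AE \<omega> in P. E (\<lambda>\<omega>. ennreal (a1 \<omega>) + ennreal k * ennreal (a2 \<omega>)) \<omega> + E (\<lambda>\<omega>. ennreal (2 * l) * ennreal (Gr \<omega>)) \<omega> = E LF \<omega>"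
    unfolding E_def LF_def by (rule S.nn_cond_exp_sum) measurable
  have s2: "AE \<omega> in P. E (\<lambda>\<omega>. ennreal (a1 \<omega>)) \<omega> + E (\<lambda>\<omega>. ennreal k * ennreal (a2 \<omega>)) \<omega> = E (\<lambda>\<omega>. ennreal (a1 \<omega>) + ennreal k * ennreal (a2 \<omega>)) \<omega>"
    unfolding E_def by (rule S.nn_cond_exp_sum) measurable
  have p1: "AE \<omega> in P. ennreal k * E (\<lambda>\<omega>. ennreal (a2 \<omega>)) \<omega> = E (\<lambda>\<omega>. ennreal k * ennreal (a2 \<omega>)) \<omega>"
    unfolding E_def by (rule S.nn_cond_exp_prod[OF ck(1)]) measurable
  have p2: "AE \<omega> in P. ennreal (2 * l) * E (\<lambda>\<omega>. ennreal (Gr \<omega>)) \<omega> = E (\<lambda>\<omega>. ennreal (2 * l) * ennreal (Gr \<omega>)) \<omega>"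
    unfolding E_def by (rule S.nn_cond_exp_prod[OF ck(2)]) measurable
  have s3: "AE \<omega> in P. E (\<lambda>\<omega>. ennreal (r0 \<omega>) + ennreal (2 * l) * ennreal (- Gr \<omega>)) \<omega> + E (\<lambda>\<omega>. ennreal cc * ennreal ((fr \<omega>)\<^sup>2)) \<omega> = E RF \<omega>"
    unfolding E_def RF_def by (rule S.nn_cond_exp_sum) measurable
  have s4: "AE \<omega> in P. E (\<lambda>\<omega>. ennreal (r0 \<omega>)) \<omega> + E (\<lambda>\<omega>. ennreal (2 * l) * ennreal (- Gr \<omega>)) \<omega> = E (\<lambda>\<omega>. ennreal (r0 \<omega>) + ennreal (2 * l) * ennreal (- Gr \<omega>)) \<omega>"
    unfolding E_def by (rule S.nn_cond_exp_sum) measurable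
  have p3: "AE \<omega> in P. ennreal (2 * l) * E (\<lambda>\<omega>. ennreal (- Gr \<omega>)) \<omega> = E (\<lambda>\<omega>. ennreal (2 * l) * ennreal (- Gr \<omega>)) \<omega>"
    unfolding E_def by (rule S.nn_cond_exp_prod[OF ck(2)]) measurable
  have p4: "AE \<omega> in P. ennreal cc * E (\<lambda>\<omega>. ennreal ((fr \<omega>)\<^sup>2)) \<omega> = E (\<lambda>\<omega>. ennreal cc * ennreal ((fr \<omega>)\<^sup>2)) \<omega>"
    unfolding E_def by (rule S.nn_cond_exp_prod[OF ck(3)]) measurable
  have f1: "AE \<omega> in P. ennreal (r0 \<omega>) = E (\<lambda>\<omega>. ennreal (r0 \<omega>)) \<omega>"
    unfolding E_def by (rule S.nn_cond_exp_F_meas) measurable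
  have gm: "(\<lambda>s. ennreal ((fst (\<phi>s s))\<^sup>2)) \<in> borel_measurable \<mu>" using frm by measurable
  have intc: "(\<integral>\<^sup>+s. ennreal ((fst (\<phi>s s))\<^sup>2) \<partial>\<mu>) = ennreal c"
    unfolding c_eq by (rule nn_integral_eq_integral[OF phint]) simp
  have i1: "AE \<omega> in P. E (\<lambda>\<omega>. ennreal ((fr \<omega>)\<^sup>2)) \<omega> = ennreal c"
    using indep_cond_exp[OF probO xi_meas xi_indep _ gm, of n] xi_distr
    unfolding E_def F_def fr_def sn_def intc by simp
  have A3n: "AE \<omega> in P. enn2real (E (\<lambda>\<omega>. ennreal (Gr \<omega>)) \<omega>) - enn2real (E (\<lambda>\<omega>. ennreal (- Gr \<omega>)) \<omega>) = 0"
    using A3[rule_format, of n] unfolding real_cond_exp_def E_def F_def Gr_def x_def sn_def .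
  have bnd: "\<bar>Gr \<omega>\<bar> \<le> (fr \<omega>)\<^sup>2 + r0 \<omega>" if \<omega>: "\<omega> \<in> space P" for \<omega>
  proof -
    have s: "sn \<omega> \<in> space \<mu>" using measurable_space[OF snm \<omega>] .
    have "\<bar>Gr \<omega>\<bar> \<le> fr \<omega> * dist xs (x \<omega>)"
      using tinner_abs[OF phit[OF s] logm_tangent[OF hadamard, of xs "x \<omega>"]] unfolding Gr_def fr_def
      by (simp add: logm_def)
    also have "fr \<omega> * dist xs (x \<omega>) = fr \<omega> * dist (x \<omega>) xs" by (simp add: dist_commute)
    also have "\<dots> \<le> (fr \<omega>)\<^sup>2 + r0 \<omega>"
    proof -
      have "2 * (fr \<omega> * dist (x \<omega>) xs) \<le> (fr \<omega>)\<^sup>2 + (dist (x \<omega>) xs)\<^sup>2"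
        using sum_squares_bound[of "fr \<omega>" "dist (x \<omega>) xs"] by (simp add: power2_eq_square)
      moreover have "fr \<omega> * dist (x \<omega>) xs \<ge> 0" using tangent_fst[OF phit[OF s]] unfolding fr_def by simp
      ultimately show ?thesis unfolding r0_def by linarith
    qed
    finally show ?thesis .
  qed
  have frsq: "(\<lambda>\<omega>. ennreal ((fr \<omega>)\<^sup>2)) \<in> borel_measurable P" by measurable
  have s5: "AE \<omega> in P. E (\<lambda>\<omega>. ennreal ((fr \<omega>)\<^sup>2)) \<omega> + E (\<lambda>\<omega>. ennreal (r0 \<omega>)) \<omega> = E (\<lambda>\<omega>. ennreal ((fr \<omega>)\<^sup>2) + ennreal (r0 \<omega>)) \<omega>"
    unfolding E_def by (rule S.nn_cond_exp_sum) measurable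
  have bm: "AE \<omega> in P. E (\<lambda>\<omega>. ennreal (g \<omega>)) \<omega> \<le> E (\<lambda>\<omega>. ennreal ((fr \<omega>)\<^sup>2) + ennreal (r0 \<omega>)) \<omega>"
    if g: "g \<in> borel_measurable P" "\<And>\<omega>. \<omega> \<in> space P \<Longrightarrow> g \<omega> \<le> (fr \<omega>)\<^sup>2 + r0 \<omega>" for g
    unfolding E_def
  proof (rule S.nn_cond_exp_mono[OF AE_I2])
    fix \<omega> assume \<omega>: "\<omega> \<in> space P"
    have "ennreal (g \<omega>) \<le> ennreal ((fr \<omega>)\<^sup>2 + r0 \<omega>)" using g(2)[OF \<omega>] by (rule ennreal_leI)
    also have "\<dots> = ennreal ((fr \<omega>)\<^sup>2) + ennreal (r0 \<omega>)" using r0nn by (intro ennreal_plus) auto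
    finally show "ennreal (g \<omega>) \<le> ennreal ((fr \<omega>)\<^sup>2) + ennreal (r0 \<omega>)" .
  qed (use g(1) in measurable)
  have h5: "AE \<omega> in P. E (\<lambda>\<omega>. ennreal (Gr \<omega>)) \<omega> \<le> E (\<lambda>\<omega>. ennreal ((fr \<omega>)\<^sup>2) + ennreal (r0 \<omega>)) \<omega>"
    by (rule bm[OF GP]) (use bnd abs_le_D1 in blast)
  have nGP: "(\<lambda>\<omega>. - Gr \<omega>) \<in> borel_measurable P" by measurable
  have h6: "AE \<omega> in P. E (\<lambda>\<omega>. ennreal (- Gr \<omega>)) \<omega> \<le> E (\<lambda>\<omega>. ennreal ((fr \<omega>)\<^sup>2) + ennreal (r0 \<omega>)) \<omega>"
    by (rule bm[OF nGP]) (use bnd abs_le_D2 in blast)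
  have fin: "AE \<omega> in P. E (\<lambda>\<omega>. ennreal ((fr \<omega>)\<^sup>2) + ennreal (r0 \<omega>)) \<omega> < top"
    using s5 i1 f1
  proof eventually_elim
    case (elim \<omega>)
    then have "E (\<lambda>\<omega>. ennreal ((fr \<omega>)\<^sup>2) + ennreal (r0 \<omega>)) \<omega> = ennreal c + ennreal (r0 \<omega>)" by simp
    also have "\<dots> = ennreal (c + r0 \<omega>)" using c0 r0nn by (intro ennreal_plus[symmetric]) auto
    finally show ?case by simp
  qed
  have main: "AE \<omega> in P. E (\<lambda>\<omega>. ennreal (a1 \<omega>)) \<omega> + ennreal k * E (\<lambda>\<omega>. ennreal (a2 \<omega>)) \<omega>
        \<le> ennreal (r0 \<omega>) + ennreal cc * ennreal c"
    using h1 s1 s2 p1 p2 s3 s4 p3 p4 f1 i1 A3n h5 h6 fin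
  proof eventually_elim
    case (elim \<omega>)
    define Ep where "Ep = E (\<lambda>\<omega>. ennreal (Gr \<omega>)) \<omega>"
    define Em where "Em = E (\<lambda>\<omega>. ennreal (- Gr \<omega>)) \<omega>"
    have Ep: "Ep < top" using elim(13,15) unfolding Ep_def by (meson le_less_trans)
    have Em: "Em < top" using elim(14,15) unfolding Em_def by (meson le_less_trans)
    have "enn2real Ep = enn2real Em" using elim(12) unfolding Ep_def Em_def by simp
    then have EpEm: "Ep = Em" using Ep Em by (metis ennreal_enn2real)
    have "E (\<lambda>\<omega>. ennreal (a1 \<omega>)) \<omega> + ennreal k * E (\<lambda>\<omega>. ennreal (a2 \<omega>)) \<omega> + ennreal (2 * l) * Ep
        \<le> ennreal (r0 \<omega>) + ennreal (2 * l) * Em + ennreal cc * ennreal c"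
      using elim(1-11) unfolding Ep_def Em_def by simp
    then show ?case by (rule cancel_final[OF _ EpEm Em]) simp
  qed
  have fin2: "AE \<omega> in P. E (\<lambda>\<omega>. ennreal (a1 \<omega>)) \<omega> + ennreal k * E (\<lambda>\<omega>. ennreal (a2 \<omega>)) \<omega>
        \<le> ennreal (r0 \<omega> + l\<^sup>2 * c / (2 * \<beta>))"
    using main
  proof eventually_elim
    case (elim \<omega>)
    have "ennreal cc * ennreal c = ennreal (cc * c)" using cc0 by (rule ennreal_mult'[symmetric])
    moreover have "ennreal (r0 \<omega>) + ennreal (cc * c) = ennreal (r0 \<omega> + cc * c)"
      using r0nn cc0 c0 by (intro ennreal_plus[symmetric]) auto
    moreover have "cc * c = l\<^sup>2 * c / (2 * \<beta>)" unfolding cc_def by simp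
    ultimately show ?case using elim by simp
  qed
  then show ?thesis unfolding E_def F_def a1_def a2_def r0_def k_def l_def c_def x1_def x_def sn_def .
qed


end
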